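(* In the split setting, let $\mathcal{H}$ have orthonormal basis $\{\phi_\gamma\}_{\gamma\in\mathbb{F}}$ and put $m(\alpha_1\mathbf{e}_1,\alpha_2\mathbf{e}_2)=i^{h((\alpha_1\alpha_2)^{1/2})}$. For $\mathbf{u}=\alpha_1\mathbf{e}_1+\alpha_2\mathbf{e}_2$ and $\mathbf{v}=\beta_1\mathbf{e}_1+\beta_2\mathbf{e}_2$, define $$W(\mathbf{u})\phi_\gamma=m(\alpha_1\mathbf{e}_1,\alpha_2\mathbf{e}_2)(-1)^{\mathrm{Tr}(\alpha_2\gamma)}\phi_{\gamma+\alpha_1},$$ and, for $\mathbf{u}\neq0$, $$\mathsf{Q}(o+\mathbf{v}+\mathbb{F}\mathbf{u})\phi_\gamma=\frac{1}{|\mathbb{F}|}\sum_{\lambda\in\mathbb{F}} i^{h(\lambda(\alpha_1\alpha_2)^{1/2})}(-1)^{\mathrm{Tr}\,\lambda[\alpha_2(\beta_1+\gamma)+\alpha_1\beta_2]}\phi_{\gamma+\lambda\alpha_1}.$$ Then the following hold: - $\mathsf{Q}$ is a well-defined quadrature system on $\mathcal{H}$. - $W$ is a projective unitary representation of $V$ with $W(\mathbf{w})\mathsf{Q}(\mathfrak{l})W(\mathbf{w})^*=\mathsf{Q}(\mathfrak{l}+\mathbf{w})$ for all lines $\mathfrak{l}$ and all $\mathbf{w}\in V$, and its multiplier is the Weyl multiplier $i^g$ of $(V,S)$. - The unitary $U(A)$ given by $U(A)\phi_\gamma=\phi_{\xi\gamma}$ satisfies $U(A)\mathsf{Q}(\mathfrak{l})U(A)^*=\mathsf{Q}(A\cdot\mathfrak{l})$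 for all lines $\mathfrak{l}$. Hence $\mathsf{Q}$ is $(T\rtimes V)$-covariant.
   Context: $\mathbb{F}$ is a finite field with $|\mathbb{F}|=2^n$, $\mathrm{Tr}$ is its trace to $\mathbb{Z}_2$, and $\alpha^{1/2}=\alpha^{|\mathbb{F}|/2}$. $V$ is a $2$-dimensional $\mathbb{F}$-space with symplectic form $S$ (nonzero bilinear with $S(\mathbf{v},\mathbf{v})=0$). $\Omega$ is an affine space over $V$ (free transitive $V$-action) with fixed origin $o$. Lines are sets $o+\mathbf{v}+\mathbb{F}\mathbf{u}$ with $\mathbf{u}\neq0$, and $A\cdot(o+\mathbf{v}+\mathbb{F}\mathbf{u})=o+A\mathbf{v}+\mathbb{F}A\mathbf{u}$ for $A\in\mathrm{SL}(V)$. A quadrature system on $\mathcal{H}$ ($\dim\mathcal{H}=|\mathbb{F}|$) is a map $\mathsf{Q}$ from lines to operators such that: (i) each $\mathsf{Q}(\mathfrak{l})$ is a rank-one orthogonal projection; (ii) for each direction, the projections of the lines parallel to it sum to $I$; (iii) $\mathrm{tr}(\mathsf{Q}(\mathfrak{l}_1)\mathsf{Q}(\mathfrak{l}_2))=1/|\mathbb{F}|$ for lines of different directions. $T$ is a maximal split torus, i.e. a cyclic subgroup of $\mathrm{SL}(V)$ of order $|\mathbb{F}|-1$, with generator $A$ having eigenvalues $\xi,\xi^{-1}\in\mathbb{F}$. $\{\mathbf{e}_1,\mathbf{e}_2\}$ is a basis with $S(\mathbf{e}_1,\mathbf{e}_2)=1$, $A\mathbf{e}_1=\xi\mathbf{e}_1$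 and $A\mathbf{e}_2=\xi^{-1}\mathbf{e}_2$. $h:\mathbb{F}\to\mathbb{Z}_4$ is defined by $h(\sum_i z_i\omega_i)=\sum_i r_iz_i^2$ ($z_i\in\mathbb{Z}_2$, $z^2$ read in $\mathbb{Z}_4$), where $\{\omega_i\}$ is a $\mathbb{Z}_2$-basis of $\mathbb{F}$ with $\mathrm{Tr}(\omega_i\omega_j)=\delta_{ij}$ and $r_i\in\{\pm1\}$ are fixed signs. $g$ is the $\mathbb{Z}_4$-valued function $$g(\mathbf{u},\mathbf{v})=h\big(B_+(\mathbf{u}+\mathbf{v},\mathbf{u}+\mathbf{v})^{1/2}\big)-h\big(B_+(\mathbf{u},\mathbf{u})^{1/2}\big)-h\big(B_+(\mathbf{v},\mathbf{v})^{1/2}\big)+2\,\mathrm{Tr}\,B_+(\mathbf{u},\mathbf{v}),$$ with $B_+(\mathbf{u},\mathbf{v})=S(\mathbf{u},\mathbf{e}_1)S(\mathbf{v},\mathbf{e}_2)$. A Weyl multiplier for $(V,S)$ is a unit-modulus $2$-cocycle $m$ on $V$ with $m(\mathbf{d}_1,\mathbf{d}_2)=1$ for $\mathbf{d}_1,\mathbf{d}_2$ in a common direction and $\overline{m(\mathbf{u},\mathbf{v})}m(\mathbf{v},\mathbf{u})=(-1)^{\mathrm{Tr}\,S(\mathbf{u},\mathbf{v})}$. *)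

theory Defs
  imports Complex_Main "HOL-Library.Cardinality"
begin

text \<open>Absolute trace \<open>Tr : F \<rightarrow> Z_2\<close> for \<open>|F| = 2^n\<close>; its value is 0 or 1 in F.\<close>
definition Tr :: "nat \<Rightarrow> 'a::field \<Rightarrow> 'a" where
  "Tr n x = (\<Sum>k<n. x ^ (2 ^ k))"

text \<open>\<open>(-1)^t\<close> for \<open>t \<in> Z_2\<close> (viewed inside F).\<close>
definition msign :: "'a::field \<Rightarrow> complex" where
  "msign t = (if t = 0 then 1 else -1)"

text \<open>\<open>i^k\<close> for \<open>k \<in> Z_4\<close> (represented by an integer).\<close>
definition ipow :: "int \<Rightarrow> complex" where
  "ipow k = \<i> ^ nat (k mod 4)"

definition fsqrt :: "'a::{field,finite} \<Rightarrow> 'a" where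
  "fsqrt x = x ^ (CARD('a) div 2)"

definition coords :: "nat \<Rightarrow> (nat \<Rightarrow> 'a::field) \<Rightarrow> 'a \<Rightarrow> nat \<Rightarrow> int" where
  "coords n \<omega> x = (THE z. (\<forall>i<n. z i \<in> {0,1}) \<and> (\<forall>i\<ge>n. z i = 0) \<and>
                           x = (\<Sum>i<n. of_int (z i) * \<omega> i))"

definition hZ4 :: "nat \<Rightarrow> (nat \<Rightarrow> 'a::field) \<Rightarrow> (nat \<Rightarrow> int) \<Rightarrow> 'a \<Rightarrow> int" where
  "hZ4 n \<omega> r x = (\<Sum>i<n. r i * (coords n \<omega> x i)^2) mod 4"

type_synonym 'a vec = "'a \<times> 'a"

definition vadd :: "'a::field vec \<Rightarrow> 'a vec \<Rightarrow> 'a vec" where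
  "vadd u v = (fst u + fst v, snd u + snd v)"

definition vscale :: "'a::field \<Rightarrow> 'a vec \<Rightarrow> 'a vec" where
  "vscale c u = (c * fst u, c * snd u)"

definition e1 :: "'a::field vec" where "e1 = (1, 0)"
definition e2 :: "'a::field vec" where "e2 = (0, 1)"

definition Sform :: "'a::field vec \<Rightarrow> 'a vec \<Rightarrow> 'a" where
  "Sform u v = fst u * snd v - snd u * fst v"

definition Bplus :: "'a::field vec \<Rightarrow> 'a vec \<Rightarrow> 'a" where
  "Bplus u v = Sform u e1 * Sform v e2"

definition gZ4 :: "nat \<Rightarrow> (nat \<Rightarrow> 'a::{field,finite}) \<Rightarrow> (nat \<Rightarrow> int) \<Rightarrow> 'a vec \<Rightarrow> 'a vec \<Rightarrow> int" where
  "gZ4 n \<omega> r u v =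
     (hZ4 n \<omega> r (fsqrt (Bplus (vadd u v) (vadd u v)))
      - hZ4 n \<omega> r (fsqrt (Bplus u u)) - hZ4 n \<omega> r (fsqrt (Bplus v v))
      + 2 * (if Tr n (Bplus u v) = 0 then 0 else 1)) mod 4"

text \<open>Lines \<open>o + v + F u\<close> (points of \<open>\<Omega>\<close> identified with V via the origin o).\<close>
definition line :: "'a::field vec \<Rightarrow> 'a vec \<Rightarrow> 'a vec set" where
  "line v u = {vadd v (vscale c u) | c. True}"

definition is_line :: "'a::field vec set \<Rightarrow> bool" where
  "is_line l \<longleftrightarrow> (\<exists>v u. u \<noteq> (0,0) \<and> l = line v u)"

definition parallel :: "'a::field vec \<Rightarrow> 'a vec \<Rightarrow> bool" where
  "parallel u u' \<longleftrightarrow> (\<exists>c. u' = vscale c u)"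

definition translate :: "'a::field vec set \<Rightarrow> 'a vec \<Rightarrow> 'a vec set" where
  "translate l w = (\<lambda>p. vadd p w) ` l"

section \<open>Operators on \<open>H = span{\<phi>_\<gamma>}\<close> as matrices \<open>M \<delta> \<gamma> = \<langle>\<phi>_\<delta>, M \<phi>_\<gamma>\<rangle>\<close>\<close>

type_synonym 'a op = "'a \<Rightarrow> 'a \<Rightarrow> complex"

definition opmult :: "'a::finite op \<Rightarrow> 'a op \<Rightarrow> 'a op" where
  "opmult A B = (\<lambda>\<delta> \<gamma>. \<Sum>\<eta>\<in>UNIV. A \<delta> \<eta> * B \<eta> \<gamma>)"

definition adj :: "'a op \<Rightarrow> 'a op" where
  "adj A = (\<lambda>\<delta> \<gamma>. cnj (A \<gamma> \<delta>))"

definition idop :: "'a op" where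
  "idop = (\<lambda>\<delta> \<gamma>. if \<delta> = \<gamma> then 1 else 0)"

definition optrace :: "'a::finite op \<Rightarrow> complex" where
  "optrace A = (\<Sum>\<gamma>\<in>UNIV. A \<gamma> \<gamma>)"

definition opsum :: "'b set \<Rightarrow> ('b \<Rightarrow> 'a op) \<Rightarrow> 'a op" where
  "opsum I f = (\<lambda>\<delta> \<gamma>. \<Sum>i\<in>I. f i \<delta> \<gamma>)"

definition unitary_op :: "'a::finite op \<Rightarrow> bool" where
  "unitary_op U \<longleftrightarrow> opmult U (adj U) = idop \<and> opmult (adj U) U = idop"

definition rank_one_proj :: "'a::finite op \<Rightarrow> bool" where
  "rank_one_proj P \<longleftrightarrow> (\<exists>\<psi>. (\<Sum>\<gamma>\<in>UNIV. (cmod (\<psi> \<gamma>))^2) = 1 \<and>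
                              P = (\<lambda>\<delta> \<gamma>. \<psi> \<delta> * cnj (\<psi> \<gamma>)))"

definition quadrature_system :: "('a::{field,finite} vec set \<Rightarrow> 'a op) \<Rightarrow> bool" where
  "quadrature_system Q \<longleftrightarrow>
     (\<forall>l. is_line l \<longrightarrow> rank_one_proj (Q l)) \<and>
     (\<forall>u. u \<noteq> (0,0) \<longrightarrow> opsum {line v u | v. True} Q = idop) \<and>
     (\<forall>v1 u1 v2 u2. u1 \<noteq> (0,0) \<longrightarrow> u2 \<noteq> (0,0) \<longrightarrow> \<not> parallel u1 u2 \<longrightarrow>
        optrace (opmult (Q (line v1 u1)) (Q (line v2 u2))) = 1 / of_nat CARD('a))"

text \<open>Projective unitary representation with multiplier m, convention \<open>W(u+v) = m(u,v) W(u) W(v)\<close>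
  (the convention under which the multiplier of the construction is \<open>i^g\<close>).\<close>
definition proj_unitary_rep :: "('a::{field,finite} vec \<Rightarrow> 'a op) \<Rightarrow> ('a vec \<Rightarrow> 'a vec \<Rightarrow> complex) \<Rightarrow> bool" where
  "proj_unitary_rep W m \<longleftrightarrow> (\<forall>u. unitary_op (W u)) \<and>
     (\<forall>u v. cmod (m u v) = 1) \<and>
     (\<forall>u v. W (vadd u v) = (\<lambda>\<delta> \<gamma>. m u v * opmult (W u) (W v) \<delta> \<gamma>))"

definition weyl_multiplier :: "nat \<Rightarrow> ('a::{field,finite} vec \<Rightarrow> 'a vec \<Rightarrow> complex) \<Rightarrow> bool" where
  "weyl_multiplier n m \<longleftrightarrow>
     (\<forall>u v. cmod (m u v) = 1) \<and>
     (\<forall>u v w. m u v * m (vadd u v) w = m u (vadd v w) * m v w) \<and>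
     (\<forall>d1 d2. (\<exists>u a b. d1 = vscale a u \<and> d2 = vscale b u) \<longrightarrow> m d1 d2 = 1) \<and>
     (\<forall>u v. cnj (m u v) * m v u = msign (Tr n (Sform u v)))"

definition Wop :: "nat \<Rightarrow> (nat \<Rightarrow> 'a::{field,finite}) \<Rightarrow> (nat \<Rightarrow> int) \<Rightarrow> 'a vec \<Rightarrow> 'a op" where
  "Wop n \<omega> r u = (\<lambda>\<delta> \<gamma>. if \<delta> = \<gamma> + fst u
      then ipow (hZ4 n \<omega> r (fsqrt (fst u * snd u))) * msign (Tr n (snd u * \<gamma>)) else 0)"

definition Qrep :: "nat \<Rightarrow> (nat \<Rightarrow> 'a::{field,finite}) \<Rightarrow> (nat \<Rightarrow> int) \<Rightarrow> 'a vec \<Rightarrow> 'a vec \<Rightarrow> 'a op" where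
  "Qrep n \<omega> r v u = (\<lambda>\<delta> \<gamma>. (1 / of_nat CARD('a)) *
      (\<Sum>lam\<in>UNIV. if \<delta> = \<gamma> + lam * fst u then
         ipow (hZ4 n \<omega> r (lam * fsqrt (fst u * snd u))) *
         msign (Tr n (lam * (snd u * (fst v + \<gamma>) + fst u * snd v)))
       else 0))"

definition Qline :: "nat \<Rightarrow> (nat \<Rightarrow> 'a::{field,finite}) \<Rightarrow> (nat \<Rightarrow> int) \<Rightarrow> 'a vec set \<Rightarrow> 'a op" where
  "Qline n \<omega> r l = (let p = (SOME p. snd p \<noteq> (0,0) \<and> l = line (fst p) (snd p))
                     in Qrep n \<omega> r (fst p) (snd p))"

text \<open>Torus element \<open>A^k\<close>: \<open>e_1 \<mapsto> \<xi>^k e_1\<close>, \<open>e_2 \<mapsto> \<xi>^{-k} e_2\<close>, acting on lines.\<close>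
definition torus_act :: "'a::field \<Rightarrow> 'a vec \<Rightarrow> 'a vec" where
  "torus_act c u = (c * fst u, inverse c * snd u)"

definition line_act :: "'a::field \<Rightarrow> 'a vec set \<Rightarrow> 'a vec set" where
  "line_act c l = torus_act c ` l"

definition Uop :: "'a::field \<Rightarrow> 'a op" where
  "Uop c = (\<lambda>\<delta> \<gamma>. if \<delta> = c * \<gamma> then 1 else 0)"

end

theory Submission
  imports Defs
begin


locale F2 =
  fixes n :: nat and \<omega> :: "nat \<Rightarrow> 'a::{field,finite}" and r :: "nat \<Rightarrow> int"
  assumes card: "CARD('a) = 2 ^ n"
    and char2: "(1::'a) + 1 = 0"
    and dual_basis: "\<forall>i<n. \<forall>j<n. Tr n (\<omega> i * \<omega> j) = (if i = j then 1 else 0)"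
    and signs: "\<forall>i<n. r i = 1 \<or> r i = -1"
begin

lemma add_self: "(x::'a) + x = 0"
proof -
  have "x + x = (1+1)*x" by (simp add: algebra_simps)
  thus ?thesis using char2 by simp
qed

lemma neg_eq: "- (x::'a) = x"
  using minus_unique[OF add_self[of x]] .

lemma minus_eq_plus: "(x::'a) - y = x + y"
  unfolding diff_conv_add_uminus neg_eq by (rule refl)

lemma add_cancel_iff: "((x::'a) + y = 0) = (x = y)"
  using eq_neg_iff_add_eq_0[of x y] neg_eq[of y] by simp

lemma n_pos: "n \<ge> 1"
proof (rule ccontr)
  assume "\<not> n \<ge> 1" hence "n = 0" by simp
  hence "CARD('a) = 1" using card by simp
  then obtain a::'a where a: "UNIV = {a}" by (rule card_1_singletonE)
  have "(0::'a) \<in> {a}" "(1::'a) \<in> {a}" unfolding a[symmetric] by simp_all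
  hence "(0::'a) = 1" by simp
  thus False by simp
qed

lemma card_pos: "0 < CARD('a)"
  using finite_UNIV_card_ge_0[OF finite_class.finite_UNIV] .

lemma fermat: "(x::'a) ^ CARD('a) = x"
proof (cases "x = 0")
  case True thus ?thesis using zero_power[OF card_pos] by simp
next
  case False
  define N where "N = UNIV - {0::'a}"
  have inj: "inj_on (\<lambda>y. x*y) N" using False unfolding inj_on_def by simp
  have img: "(\<lambda>y. x*y) ` N = N"
  proof
    show "(\<lambda>y. x*y) ` N \<subseteq> N" using False unfolding N_def by auto
    show "N \<subseteq> (\<lambda>y. x*y) ` N"
    proof
      fix z assume z: "z \<in> N"
      hence "z = x * (z/x)" using False by simp
      moreover have "z/x \<in> N" using z False unfolding N_def by simp
      ultimately show "z \<in> (\<lambda>y. x*y) ` N" by blast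
    qed
  qed
  have "prod (\<lambda>y. y) N = prod (\<lambda>y. x*y) N"
    using prod.reindex[OF inj, of "\<lambda>y. y"] img by simp
  also have "\<dots> = x ^ card N * prod (\<lambda>y. y) N"
    by (simp add: prod.distrib)
  finally have eq: "prod (\<lambda>y. y) N = x ^ card N * prod (\<lambda>y. y) N" .
  have "prod (\<lambda>y. y) N \<noteq> 0" unfolding N_def by (subst prod_zero_iff) auto
  hence "x ^ card N = 1" using eq by simp
  moreover have "card N = CARD('a) - 1" unfolding N_def by (simp add: card_Diff_subset)
  moreover have "CARD('a) = Suc (CARD('a) - 1)" using card_pos by arith
  ultimately have "x ^ CARD('a) = x ^ Suc (card N)" by simp
  also have "\<dots> = x * x ^ card N" by simp
  finally show ?thesis using \<open>x ^ card N = 1\<close> by simp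
qed

lemma two_zero[simp]: "(2::'a) = 0"
  using char2 by simp

lemma frob: "((x::'a) + y)^2 = x^2 + y^2"
proof -
  have "(x+y)^2 = x^2 + y^2 + 2*(x*y)" by (simp add: power2_eq_square algebra_simps)
  thus ?thesis by simp
qed

lemma frob_pow: "((x::'a) + y)^(2^k) = x^(2^k) + y^(2^k)"
proof (induction k arbitrary: x y)
  case 0 thus ?case by simp
next
  case (Suc k)
  have "(x+y)^(2^Suc k) = ((x+y)^2)^(2^k)" by (simp add: power_mult[symmetric] mult.commute)
  also have "\<dots> = (x^2)^(2^k) + (y^2)^(2^k)" by (simp add: frob Suc)
  also have "\<dots> = x^(2^Suc k) + y^(2^Suc k)" by (simp add: power_mult[symmetric] mult.commute)
  finally show ?case .
qed

lemma pow_card_n: "(x::'a)^(2^n) = x" using fermat card by simp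

lemma Tr_add: "Tr n (x + y) = Tr n x + Tr n (y::'a)"
  by (simp add: Tr_def frob_pow sum.distrib)

lemma Tr_zero[simp]: "Tr n (0::'a) = 0"
  by (simp add: Tr_def zero_power)

lemma sum_sq: "(\<Sum>k\<in>A. (f k::'a))^2 = (\<Sum>k\<in>A. (f k)^2)"
  by (induction A rule: infinite_finite_induct) (simp_all add: frob)

lemma Tr_sq: "Tr n ((x::'a)^2) = Tr n x"
proof -
  have A: "(\<Sum>k<Suc n. x^(2^k)) = x^(2^0) + (\<Sum>k<n. x^(2^Suc k))" by (rule sum.lessThan_Suc_shift)
  have B: "(\<Sum>k<Suc n. x^(2^k)) = (\<Sum>k<n. x^(2^k)) + x^(2^n)" by (rule sum.lessThan_Suc)
  have C: "\<And>k. (x^2)^(2^k) = x^(2^Suc k)" by (simp add: power_mult[symmetric])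
  have D: "Tr n (x^2) = (\<Sum>k<n. x^(2^Suc k))" unfolding Tr_def C ..
  have "x + (\<Sum>k<n. x^(2^Suc k)) = Tr n x + x" using A B pow_card_n by (simp add: Tr_def)
  thus ?thesis using D by (simp add: add.commute)
qed

lemma Tr_01: "Tr n (x::'a) = 0 \<or> Tr n x = 1"
proof -
  have "(Tr n x)^2 = Tr n (x^2)" by (simp add: Tr_def sum_sq power_mult[symmetric] mult.commute)
  hence "(Tr n x)^2 = Tr n x" by (simp add: Tr_sq)
  hence "Tr n x * (Tr n x - 1) = 0" by (simp add: power2_eq_square algebra_simps)
  thus ?thesis by auto
qed

end


lemma i_pow_mod: "\<i> ^ m = \<i> ^ (m mod 4)"
proof -
  define k where "k = m div 4"
  have e: "m = 4 * k + m mod 4" unfolding k_def by simp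
  have "\<i> ^ (4 * k + m mod 4) = (\<i>^4) ^ k * \<i> ^ (m mod 4)" by (simp only: power_add power_mult)
  also have "(\<i>^4) = (1::complex)" by (simp add: power4_eq_xxxx)
  finally have "\<i> ^ (4 * k + m mod 4) = \<i> ^ (m mod 4)" by simp
  with e show ?thesis by simp
qed

lemma ipow_add: "ipow (a + b) = ipow a * ipow b"
proof -
  define p where "p = nat (a mod 4)"
  define q where "q = nat (b mod 4)"
  have pa: "int p = a mod 4" unfolding p_def by simp
  have qb: "int q = b mod 4" unfolding q_def by simp
  have "(a + b) mod 4 = (int p + int q) mod 4" using pa qb by (simp add: mod_add_eq)
  also have "\<dots> = int ((p + q) mod 4)" by (simp add: zmod_int)
  finally have "nat ((a+b) mod 4) = (p+q) mod 4" by simp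
  hence "ipow (a+b) = \<i> ^ ((p+q) mod 4)" by (simp add: ipow_def)
  also have "\<dots> = \<i> ^ (p+q)" using i_pow_mod[of "p+q"] by simp
  also have "\<dots> = ipow a * ipow b" by (simp add: ipow_def p_def q_def power_add)
  finally show ?thesis .
qed

lemma ipow_mod: "ipow (k mod 4) = ipow k"
  by (simp add: ipow_def)

lemma ipow_0[simp]: "ipow 0 = 1" by (simp add: ipow_def)
lemma ipow_1: "ipow 1 = \<i>" by (simp add: ipow_def)
lemma ipow_2: "ipow 2 = -1" by (simp add: ipow_def)
lemma ipow_m1: "ipow (-1) = - \<i>"
proof -
  have "(-1::int) mod 4 = 3" by simp
  thus ?thesis by (simp add: ipow_def power3_eq_cube)
qed

lemma norm_ipow[simp]: "cmod (ipow k) = 1" by (simp add: ipow_def norm_power)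

lemma unit_cnj: "cmod z = 1 \<Longrightarrow> cnj z * z = 1"
  using complex_norm_square[of z] by (simp add: mult.commute)

lemma ipow_nz: "ipow k \<noteq> 0" by (simp add: ipow_def)

lemma ipow_neg: "ipow (- k) = cnj (ipow k)"
proof -
  have "ipow (-k) * ipow k = 1" using ipow_add[of "-k" k] by simp
  moreover have "cnj (ipow k) * ipow k = 1"
    using unit_cnj[OF norm_ipow[of k]] .
  moreover have "ipow k \<noteq> 0" by (rule ipow_nz)
  ultimately have "ipow (-k) * ipow k = cnj (ipow k) * ipow k" by simp
  thus ?thesis using mult_right_cancel[OF \<open>ipow k \<noteq> 0\<close>] by simp
qed

lemma ipow_diff: "ipow (a - b) = ipow a * cnj (ipow b)"
  using ipow_add[of a "-b"] ipow_neg[of b] by simp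

lemma ipow_sum: "ipow (sum f A) = (\<Prod>i\<in>A. ipow (f i))"
  by (induction A rule: infinite_finite_induct) (simp_all add: ipow_add)

lemma cnj_ipow_mult: "cnj (ipow k) * ipow k = 1"
  using unit_cnj[OF norm_ipow[of k]] .

context F2 begin

abbreviation chi :: "'a \<Rightarrow> complex" where "chi x \<equiv> msign (Tr n x)"
abbreviation ee :: "'a \<Rightarrow> complex" where "ee x \<equiv> ipow (hZ4 n \<omega> r x)"

lemma chi_add: "chi (x + y) = chi x * chi y"
  using Tr_01[of x] Tr_01[of y] char2 by (auto simp: msign_def Tr_add)

lemma chi_zero[simp]: "chi 0 = 1" by (simp add: msign_def)

lemma chi_sq: "chi x * chi x = 1" by (simp add: msign_def)
lemma chi_cnj[simp]: "cnj (chi x) = chi x" by (simp add: msign_def)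
lemma chi_pow2: "chi (x^2) = chi x" by (simp add: Tr_sq)

lemma exists_Tr1: "\<exists>t::'a. Tr n t \<noteq> 0"
proof -
  have "Tr n (\<omega> 0 * \<omega> 0) = 1" using dual_basis n_pos by auto
  thus ?thesis by (metis one_neq_zero)
qed

lemma chi_sum: "(\<Sum>x\<in>UNIV. chi x) = 0"
proof -
  obtain t::'a where t: "Tr n t \<noteq> 0" using exists_Tr1 by blast
  have ct: "chi t = -1" using t by (simp add: msign_def)
  have "(\<Sum>x\<in>UNIV. chi x) = (\<Sum>x\<in>UNIV. chi (x + t))"
    by (rule sum.reindex_bij_witness[where i="\<lambda>x. x + t" and j="\<lambda>x. x + t"])
       (simp_all add: add.assoc add_self)
  also have "\<dots> = - (\<Sum>x\<in>UNIV. chi x)" by (simp add: chi_add ct sum_negf)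
  finally show ?thesis by simp
qed

lemma chi_sum_mult: "(\<Sum>x\<in>UNIV. chi (a * x)) = (if a = 0 then of_nat CARD('a) else 0)"
proof (cases "a = 0")
  case True thus ?thesis by (simp add: msign_def)
next
  case False
  have "(\<Sum>x\<in>UNIV. chi (a * x)) = (\<Sum>x\<in>UNIV. chi x)"
    by (rule sum.reindex_bij_witness[where i="\<lambda>x. x / a" and j="\<lambda>x. a * x"])
       (use False in simp_all)
  thus ?thesis using False chi_sum by simp
qed

lemma Tr_sum: "Tr n (sum f A) = (\<Sum>i\<in>A. Tr n (f i :: 'a))"
  by (induction A rule: infinite_finite_induct) (simp_all add: Tr_add)

lemma Tr_01mult: "c = 0 \<or> c = 1 \<Longrightarrow> Tr n (c * y) = c * Tr n (y::'a)"
  by auto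

definition Phi :: "nat set \<Rightarrow> 'a" where "Phi S = (\<Sum>i\<in>S. \<omega> i)"

lemma Tr_Phi: "S \<subseteq> {..<n} \<Longrightarrow> j < n \<Longrightarrow> Tr n (Phi S * \<omega> j) = (if j \<in> S then 1 else 0)"
proof -
  assume S: "S \<subseteq> {..<n}" and j: "j < n"
  have fin: "finite S" using S finite_subset by blast
  have "Tr n (Phi S * \<omega> j) = (\<Sum>i\<in>S. Tr n (\<omega> i * \<omega> j))"
    by (simp add: Phi_def sum_distrib_right Tr_sum)
  also have "\<dots> = (\<Sum>i\<in>S. if j = i then 1 else 0)"
    using S j dual_basis by (intro sum.cong) auto
  also have "\<dots> = (if j \<in> S then 1 else 0)" using fin by (simp add: sum.delta)
  finally show ?thesis .
qed

lemma Phi_inj: "inj_on Phi (Pow {..<n})"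
proof (rule inj_onI)
  fix S T assume S: "S \<in> Pow {..<n}" and T: "T \<in> Pow {..<n}" and eq: "Phi S = Phi T"
  show "S = T"
  proof (rule set_eqI)
    fix j show "j \<in> S \<longleftrightarrow> j \<in> T"
    proof (cases "j < n")
      case True
      have "Tr n (Phi S * \<omega> j) = Tr n (Phi T * \<omega> j)" using eq by simp
      thus ?thesis using Tr_Phi[of S j] Tr_Phi[of T j] S T True by (auto split: if_splits)
    next
      case False thus ?thesis using S T by auto
    qed
  qed
qed

lemma Phi_surj: "Phi ` Pow {..<n} = (UNIV::'a set)"
proof -
  have "card (Phi ` Pow {..<n}) = card (Pow {..<n::nat})" by (rule card_image[OF Phi_inj])
  also have "\<dots> = 2 ^ n" by (simp add: card_Pow)
  also have "\<dots> = card (UNIV::'a set)" using card by simp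
  finally show ?thesis by (intro card_subset_eq) auto
qed

lemma basis: "x = (\<Sum>i<n. if Tr n (x * \<omega> i) \<noteq> 0 then \<omega> i else (0::'a))"
proof -
  have "x \<in> Phi ` Pow {..<n}" using Phi_surj by simp
  then obtain S where S': "S \<in> Pow {..<n}" and x: "x = Phi S" by (rule imageE)
  have S: "S \<subseteq> {..<n}" using S' by simp
  have "(\<Sum>i<n. if Tr n (x * \<omega> i) \<noteq> 0 then \<omega> i else 0) = (\<Sum>i<n. if i \<in> S then \<omega> i else 0)"
    using Tr_Phi[OF S] x by (intro sum.cong) auto
  also have "\<dots> = (\<Sum>i\<in>{..<n} \<inter> S. \<omega> i)" by (simp add: sum.inter_restrict)
  also have "{..<n} \<inter> S = S" using S by blast
  finally show ?thesis using x by (simp add: Phi_def)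
qed

lemma coords_fun: "coords n \<omega> x = (\<lambda>i. if i < n \<and> Tr n (x * \<omega> i) \<noteq> 0 then 1 else 0)"
  unfolding coords_def
proof (rule the_equality)
  let ?z = "\<lambda>i. if i < n \<and> Tr n (x * \<omega> i) \<noteq> 0 then 1 else (0::int)"
  have "(\<Sum>i<n. of_int (?z i) * \<omega> i) = (\<Sum>i<n. if Tr n (x * \<omega> i) \<noteq> 0 then \<omega> i else (0::'a))"
    by (intro sum.cong) auto
  thus "(\<forall>i<n. ?z i \<in> {0, 1}) \<and> (\<forall>i\<ge>n. ?z i = 0) \<and> x = (\<Sum>i<n. of_int (?z i) * \<omega> i)"
    using basis[of x] by auto
next
  fix z assume H: "(\<forall>i<n. z i \<in> {0::int, 1}) \<and> (\<forall>i\<ge>n. z i = 0) \<and> x = (\<Sum>i<n. of_int (z i) * \<omega> i)"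
  show "z = (\<lambda>i. if i < n \<and> Tr n (x * \<omega> i) \<noteq> 0 then 1 else 0)"
  proof
    fix j show "z j = (if j < n \<and> Tr n (x * \<omega> j) \<noteq> 0 then 1 else 0)"
    proof (cases "j < n")
      case False thus ?thesis using H by auto
    next
      case True
      have "Tr n (x * \<omega> j) = (\<Sum>i<n. Tr n (of_int (z i) * (\<omega> i * \<omega> j)))"
        using H by (simp add: sum_distrib_right Tr_sum mult.assoc)
      also have "\<dots> = (\<Sum>i<n. of_int (z i) * Tr n (\<omega> i * \<omega> j))"
        using H by (intro sum.cong refl Tr_01mult) (auto)
      also have "\<dots> = (\<Sum>i<n. if j = i then of_int (z i) else 0)"
        using True dual_basis by (intro sum.cong) auto
      also have "\<dots> = of_int (z j)" using True by (simp add: sum.delta)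
      finally have "Tr n (x * \<omega> j) = of_int (z j)" .
      moreover have "z j = 0 \<or> z j = 1" using H True by auto
      ultimately show ?thesis using True by auto
    qed
  qed
qed

lemma coords_eq: "coords n \<omega> x i = (if i < n \<and> Tr n (x * \<omega> i) \<noteq> 0 then 1 else 0)"
  by (simp add: coords_fun)

lemma hZ4_eq: "hZ4 n \<omega> r x = (\<Sum>i<n. r i * (if Tr n (x * \<omega> i) \<noteq> 0 then 1 else 0)) mod 4"
  unfolding hZ4_def coords_eq by (intro arg_cong2[where f="(mod)"] sum.cong) auto

lemma ee_prod: "ee x = (\<Prod>i<n. if Tr n (x * \<omega> i) \<noteq> 0 then ipow (r i) else 1)"
  unfolding hZ4_eq ipow_mod ipow_sum by (intro prod.cong) auto

lemma ee_zero[simp]: "ee 0 = 1" by (simp add: ee_prod)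

lemma msign_sum: "finite A \<Longrightarrow> (\<forall>i\<in>A. c i = 0 \<or> c i = (1::'a)) \<Longrightarrow>
   (sum c A = 0 \<or> sum c A = 1) \<and> msign (sum c A) = (\<Prod>i\<in>A. msign (c i))"
proof (induction A rule: finite_induct)
  case empty thus ?case by (simp add: msign_def)
next
  case (insert a A)
  hence IH: "(sum c A = 0 \<or> sum c A = 1) \<and> msign (sum c A) = (\<Prod>i\<in>A. msign (c i))" by auto
  have ca: "c a = 0 \<or> c a = 1" using insert by auto
  show ?case using IH ca insert(1,2) char2 by (auto simp: msign_def)
qed

lemma Tr_mult_coords: "Tr n (x * y) = (\<Sum>i<n. Tr n (x * \<omega> i) * Tr n (y * \<omega> i))"
proof -
  have "(\<Sum>i<n. if Tr n (x * \<omega> i) \<noteq> 0 then \<omega> i else (0::'a)) = (\<Sum>i<n. Tr n (x * \<omega> i) * \<omega> i)"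
    by (intro sum.cong refl) (use Tr_01 in auto)
  with basis[of x] have xe: "x = (\<Sum>i<n. Tr n (x * \<omega> i) * \<omega> i)" by (rule trans)
  have "x * y = (\<Sum>i<n. Tr n (x * \<omega> i) * \<omega> i) * y" using arg_cong[OF xe, of "\<lambda>t. t * y"] .
  also have "\<dots> = (\<Sum>i<n. Tr n (x * \<omega> i) * (\<omega> i * y))" by (simp add: sum_distrib_right mult.assoc)
  finally have "Tr n (x * y) = Tr n (\<Sum>i<n. Tr n (x * \<omega> i) * (\<omega> i * y))" by simp
  also have "\<dots> = (\<Sum>i<n. Tr n (x * \<omega> i) * Tr n (\<omega> i * y))"
    unfolding Tr_sum by (intro sum.cong refl Tr_01mult Tr_01)
  finally show ?thesis by (simp add: mult.commute)
qed

lemma ipow_r_sq: "i < n \<Longrightarrow> ipow (r i) * ipow (r i) = -1"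
  using signs by (auto simp: ipow_1 ipow_m1)

lemma ee_add: "ee (x + y) = ee x * ee y * chi (x * y)"
proof -
  define a where "a i = Tr n (x * \<omega> i)" for i
  define b where "b i = Tr n (y * \<omega> i)" for i
  have ab: "Tr n ((x + y) * \<omega> i) = a i + b i" for i by (simp add: a_def b_def distrib_right Tr_add)
  have fac: "(if a i + b i \<noteq> 0 then ipow (r i) else 1) =
      (if a i \<noteq> 0 then ipow (r i) else 1) * (if b i \<noteq> 0 then ipow (r i) else 1) * msign (a i * b i)"
    if "i < n" for i
  proof -
    have A: "a i = 0 \<or> a i = 1" unfolding a_def by (rule Tr_01)
    have B: "b i = 0 \<or> b i = 1" unfolding b_def by (rule Tr_01)
    have R: "ipow (r i) * ipow (r i) = -1" using ipow_r_sq[OF that] .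
    show ?thesis
    proof (cases "a i = 0")
      case True thus ?thesis by (simp add: msign_def)
    next
      case False hence a1: "a i = 1" using A by simp
      show ?thesis
      proof (cases "b i = 0")
        case True thus ?thesis by (simp add: msign_def)
      next
        case False hence b1: "b i = 1" using B by simp
        show ?thesis using a1 b1 R char2 by (simp add: msign_def)
      qed
    qed
  qed
  have "ee (x + y) = (\<Prod>i<n. (if a i \<noteq> 0 then ipow (r i) else 1) * (if b i \<noteq> 0 then ipow (r i) else 1) * msign (a i * b i))"
    unfolding ee_prod ab by (intro prod.cong refl fac) auto
  also have "\<dots> = ee x * ee y * (\<Prod>i<n. msign (a i * b i))"
    by (simp add: prod.distrib ee_prod a_def b_def)
  also have "(\<Prod>i<n. msign (a i * b i)) = msign (\<Sum>i<n. a i * b i)"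
  proof -
    have c01: "\<forall>i\<in>{..<n}. a i * b i = 0 \<or> a i * b i = 1"
    proof
      fix i show "a i * b i = 0 \<or> a i * b i = 1"
        using Tr_01[of "x*\<omega> i"] Tr_01[of "y*\<omega> i"] by (auto simp: a_def b_def)
    qed
    show ?thesis using conjunct2[OF msign_sum[OF _ c01]] by simp
  qed
  also have "(\<Sum>i<n. a i * b i) = Tr n (x * y)" unfolding a_def b_def by (rule Tr_mult_coords[symmetric])
  finally show ?thesis .
qed

lemma norm_ee: "cmod (ee x) = 1" by simp
lemma cnj_ee: "cnj (ee x) * ee x = 1" by (rule cnj_ipow_mult)
lemma ee_nz: "ee x \<noteq> 0" by (rule ipow_nz)

lemma ee_sq: "ee x * ee x = chi (x^2)"
proof -
  have "ee (x + x) = ee x * ee x * chi (x*x)" by (rule ee_add)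
  hence "1 = ee x * ee x * chi (x^2)" by (simp add: add_self power2_eq_square)
  hence "chi (x^2) * 1 = ee x * ee x * (chi (x^2) * chi (x^2))" by (simp add: algebra_simps)
  thus ?thesis by (simp add: chi_sq)
qed

lemma cnj_ee2: "cnj (ee x) = ee x * chi (x^2)"
proof -
  have "cnj (ee x) = cnj (ee x) * (ee x * ee x * chi (x^2))" using ee_sq chi_sq by simp
  also have "\<dots> = ee x * chi (x^2)" using cnj_ee[of x] by (simp add: algebra_simps)
  finally show ?thesis .
qed

end


definition mono :: "'a::field \<Rightarrow> ('a \<Rightarrow> complex) \<Rightarrow> 'a op" where
  "mono a f = (\<lambda>\<delta> \<gamma>. if \<delta> = \<gamma> + a then f \<gamma> else 0)"

lemma opmult_assoc: "opmult (opmult A B) C = opmult A (opmult B (C :: 'a::finite op))"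
proof (intro ext)
  fix \<delta> \<gamma>
  have "opmult (opmult A B) C \<delta> \<gamma> = (\<Sum>\<zeta>\<in>UNIV. \<Sum>\<eta>\<in>UNIV. A \<delta> \<eta> * B \<eta> \<zeta> * C \<zeta> \<gamma>)"
    by (simp add: opmult_def sum_distrib_right)
  also have "\<dots> = (\<Sum>\<eta>\<in>UNIV. \<Sum>\<zeta>\<in>UNIV. A \<delta> \<eta> * B \<eta> \<zeta> * C \<zeta> \<gamma>)" by (rule sum.swap)
  also have "\<dots> = opmult A (opmult B C) \<delta> \<gamma>"
    by (simp add: opmult_def sum_distrib_left mult.assoc)
  finally show "opmult (opmult A B) C \<delta> \<gamma> = opmult A (opmult B C) \<delta> \<gamma>" .
qed

lemma adj_mult: "adj (opmult A B) = opmult (adj B) (adj (A :: 'a::finite op))"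
  by (intro ext) (simp add: adj_def opmult_def mult.commute)

lemma Uop_left: "c \<noteq> 0 \<Longrightarrow> opmult (Uop c) A = (\<lambda>\<delta> \<eta>. A (\<delta> / c) \<eta>)"
proof (intro ext)
  fix \<delta> \<eta> assume c: "c \<noteq> 0"
  have "opmult (Uop c) A \<delta> \<eta> = (\<Sum>\<zeta>\<in>UNIV. if \<zeta> = \<delta> / c then A \<zeta> \<eta> else 0)"
    unfolding opmult_def Uop_def using c by (intro sum.cong refl) (auto simp: field_simps)
  also have "\<dots> = A (\<delta>/c) \<eta>" by simp
  finally show "opmult (Uop c) A \<delta> \<eta> = A (\<delta> / c) \<eta>" .
qed

lemma Uop_right: "c \<noteq> 0 \<Longrightarrow> opmult A (adj (Uop c)) = (\<lambda>\<delta> \<gamma>. A \<delta> (\<gamma> / c))"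
proof (intro ext)
  fix \<delta> \<gamma> assume c: "c \<noteq> 0"
  have "opmult A (adj (Uop c)) \<delta> \<gamma> = (\<Sum>\<eta>\<in>UNIV. if \<eta> = \<gamma> / c then A \<delta> \<eta> else 0)"
    unfolding opmult_def Uop_def adj_def using c by (intro sum.cong refl) (auto simp: field_simps)
  also have "\<dots> = A \<delta> (\<gamma>/c)" by simp
  finally show "opmult A (adj (Uop c)) \<delta> \<gamma> = A \<delta> (\<gamma> / c)" .
qed

lemma Uop_conj: "c \<noteq> 0 \<Longrightarrow> opmult (opmult (Uop c) A) (adj (Uop c)) = (\<lambda>\<delta> \<gamma>. A (\<delta> / c) (\<gamma> / c))"
  by (simp add: Uop_left Uop_right)

lemma Uop_unitary: "c \<noteq> 0 \<Longrightarrow> unitary_op (Uop (c::'a::{field,finite}))"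
proof -
  assume c: "c \<noteq> 0"
  have 1: "opmult (Uop c) (adj (Uop c)) = idop"
  proof -
    have "opmult (Uop c) (adj (Uop c)) = (\<lambda>\<delta> \<eta>. adj (Uop c) (\<delta>/c) \<eta>)" by (rule Uop_left[OF c])
    also have "\<dots> = idop" using c by (intro ext) (auto simp: adj_def Uop_def idop_def)
    finally show ?thesis .
  qed
  have 2: "opmult (adj (Uop c)) (Uop c) = idop"
  proof (intro ext)
    fix \<delta> \<gamma>
    have "opmult (adj (Uop c)) (Uop c) \<delta> \<gamma> = (\<Sum>\<eta>\<in>UNIV. if \<eta> = c * \<delta> then (if \<delta> = \<gamma> then 1 else 0) else 0)"
      unfolding opmult_def adj_def Uop_def using c by (intro sum.cong refl) auto
    also have "\<dots> = idop \<delta> \<gamma>" by (simp add: idop_def)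
    finally show "opmult (adj (Uop c)) (Uop c) \<delta> \<gamma> = idop \<delta> \<gamma>" .
  qed
  show ?thesis using 1 2 by (simp add: unitary_op_def)
qed

context F2 begin

lemma eq_swap: "((g::'a) = d + a) = (d = g + a)"
proof
  assume "g = d + a" hence "g + a = d + (a + a)" by (simp add: add.assoc)
  thus "d = g + a" by (simp add: add_self)
next
  assume "d = g + a" hence "d + a = g + (a + a)" by (simp add: add.assoc)
  thus "g = d + a" by (simp add: add_self)
qed

lemma mono_left: "opmult (mono (a::'a) f) A = (\<lambda>\<delta> \<eta>. f (\<delta> + a) * A (\<delta> + a) \<eta>)"
proof (intro ext)
  fix \<delta> \<eta>
  have "opmult (mono a f) A \<delta> \<eta> = (\<Sum>\<zeta>\<in>UNIV. if \<zeta> = \<delta> + a then f \<zeta> * A \<zeta> \<eta> else 0)"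
    unfolding opmult_def mono_def by (intro sum.cong refl) (auto simp: eq_swap)
  also have "\<dots> = f (\<delta> + a) * A (\<delta> + a) \<eta>" by simp
  finally show "opmult (mono a f) A \<delta> \<eta> = f (\<delta> + a) * A (\<delta> + a) \<eta>" .
qed

lemma mono_right: "opmult A (mono (b::'a) g) = (\<lambda>\<delta> \<gamma>. A \<delta> (\<gamma> + b) * g \<gamma>)"
proof (intro ext)
  fix \<delta> \<gamma>
  have "opmult A (mono b g) \<delta> \<gamma> = (\<Sum>\<eta>\<in>UNIV. if \<eta> = \<gamma> + b then A \<delta> \<eta> * g \<gamma> else 0)"
    unfolding opmult_def mono_def by (intro sum.cong refl) auto
  also have "\<dots> = A \<delta> (\<gamma> + b) * g \<gamma>" by simp
  finally show "opmult A (mono b g) \<delta> \<gamma> = A \<delta> (\<gamma> + b) * g \<gamma>" .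
qed

lemma adj_mono: "adj (mono (a::'a) f) = mono a (\<lambda>\<gamma>. cnj (f (\<gamma> + a)))"
  by (intro ext) (auto simp: adj_def mono_def eq_swap)

lemma opmult_mono: "opmult (mono (a::'a) f) (mono b g) = mono (a + b) (\<lambda>\<gamma>. f (\<gamma> + b) * g \<gamma>)"
  unfolding mono_right by (intro ext) (auto simp: mono_def add_ac)

lemma optrace_mono: "optrace (mono (a::'a) f) = (if a = 0 then (\<Sum>\<gamma>\<in>UNIV. f \<gamma>) else 0)"
  by (auto simp: optrace_def mono_def)

lemma idop_mono: "idop = mono (0::'a) (\<lambda>_. 1)"
  by (intro ext) (simp add: idop_def mono_def)

lemma mono_conj: "opmult (opmult (mono (a::'a) f) A) (adj (mono a f)) =
   (\<lambda>\<delta> \<gamma>. f (\<delta> + a) * A (\<delta> + a) (\<gamma> + a) * cnj (f (\<gamma> + a)))"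
  by (intro ext) (simp add: mono_left adj_mono mono_right add.assoc add_self)

lemma mono_unitary: "(\<And>\<gamma>. cnj (f \<gamma>) * f \<gamma> = 1) \<Longrightarrow> unitary_op (mono (a::'a) f)"
  unfolding unitary_op_def adj_mono opmult_mono idop_mono
  by (simp add: add_self add.assoc mult.commute)

lemma half_card: "2 * (CARD('a) div 2) = CARD('a)"
proof -
  have "CARD('a) = 2 * 2^(n-1)" using card n_pos by (simp add: power_eq_if)
  thus ?thesis by simp
qed

lemma half_pos: "0 < CARD('a) div 2"
  using half_card card_pos by linarith

lemma fsqrt_sq: "(fsqrt x)^2 = (x::'a)"
  unfolding fsqrt_def power_mult[symmetric] by (simp add: mult.commute half_card fermat)

lemma fsqrt_mult: "fsqrt (x * y) = fsqrt x * fsqrt (y::'a)"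
  by (simp add: fsqrt_def power_mult_distrib)

lemma fsqrt_of_sq: "fsqrt (x^2) = (x::'a)"
  unfolding fsqrt_def power_mult[symmetric] by (simp add: half_card fermat)

lemma fsqrt_scale: "fsqrt (c * c * p) = c * fsqrt (p::'a)"
  by (simp only: fsqrt_mult[of "c*c" p] fsqrt_of_sq[unfolded power2_eq_square])

lemma fsqrt_zero[simp]: "fsqrt (0::'a) = 0"
  using half_pos by (simp add: fsqrt_def zero_power)

abbreviation EE :: "'a vec \<Rightarrow> complex" where "EE u \<equiv> ee (fsqrt (fst u * snd u))"

lemma Wop_mono: "Wop n \<omega> r u = mono (fst u) (\<lambda>\<gamma>. EE u * chi (snd u * \<gamma>))"
  by (simp add: Wop_def mono_def)

lemma Wop_unitary: "unitary_op (Wop n \<omega> r u)"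
  unfolding Wop_mono
proof (rule mono_unitary)
  fix \<gamma>
  have "cnj (EE u * chi (snd u * \<gamma>)) * (EE u * chi (snd u * \<gamma>)) =
        (cnj (EE u) * EE u) * (chi (snd u * \<gamma>) * chi (snd u * \<gamma>))" by (simp add: algebra_simps)
  thus "cnj (EE u * chi (snd u * \<gamma>)) * (EE u * chi (snd u * \<gamma>)) = 1"
    by (simp only: cnj_ee chi_sq) simp
qed

end


context F2 begin

lemma cnj_EE: "cnj (EE u) = inverse (EE u)"
  using cnj_ee[of "fsqrt (fst u * snd u)"] ee_nz by (simp add: field_simps)

lemma EE_nz: "EE u \<noteq> 0" by (rule ee_nz)

lemma chi_inv: "inverse (chi x) = chi x"
  by (simp add: msign_def)

lemma Bplus_diag: "Bplus w w = fst w * snd (w::'a vec)"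
  by (simp add: Bplus_def Sform_def e1_def e2_def neg_eq mult.commute)

lemma Bplus_uv: "Bplus u v = snd u * fst (v::'a vec)"
  by (simp add: Bplus_def Sform_def e1_def e2_def neg_eq)

lemma ipow_2t: "ipow (2 * (if Tr n (x::'a) = 0 then 0 else 1)) = chi x"
  by (auto simp: msign_def ipow_2)

lemma gform: "ipow (gZ4 n \<omega> r u v) = EE (vadd u v) * cnj (EE u) * cnj (EE v) * chi (snd u * fst v)"
proof -
  have "ipow (gZ4 n \<omega> r u v) = ipow (hZ4 n \<omega> r (fsqrt (Bplus (vadd u v) (vadd u v)))
      - hZ4 n \<omega> r (fsqrt (Bplus u u)) - hZ4 n \<omega> r (fsqrt (Bplus v v))
      + 2 * (if Tr n (Bplus u v) = 0 then 0 else 1))"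
    unfolding gZ4_def ipow_mod ..
  also have "\<dots> = EE (vadd u v) * cnj (EE u) * cnj (EE v) * chi (snd u * fst v)"
    unfolding ipow_add ipow_diff ipow_2t Bplus_diag Bplus_uv ..
  finally show ?thesis .
qed

lemma gform2: "ipow (gZ4 n \<omega> r u v) = EE (vadd u v) / (EE u * EE v) * chi (snd u * fst v)"
  unfolding gform cnj_EE by (simp add: field_simps)

lemma fst_vadd[simp]: "fst (vadd u v) = fst u + fst v" by (simp add: vadd_def)
lemma snd_vadd[simp]: "snd (vadd u v) = snd u + snd v" by (simp add: vadd_def)

lemma proj_rep: "proj_unitary_rep (Wop n \<omega> r) (\<lambda>u v. ipow (gZ4 n \<omega> r u v))"
  unfolding proj_unitary_rep_def
proof (intro conjI allI)
  fix u show "unitary_op (Wop n \<omega> r u)" by (rule Wop_unitary)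
next
  fix u v :: "'a vec" show "cmod (ipow (gZ4 n \<omega> r u v)) = 1" by simp
next
  fix u v :: "'a vec"
  show "Wop n \<omega> r (vadd u v) = (\<lambda>\<delta> \<gamma>. ipow (gZ4 n \<omega> r u v) * opmult (Wop n \<omega> r u) (Wop n \<omega> r v) \<delta> \<gamma>)"
    unfolding Wop_mono opmult_mono
  proof (intro ext)
    fix \<delta> \<gamma>
    have key: "EE (vadd u v) * chi ((snd u + snd v) * \<gamma>) =
      ipow (gZ4 n \<omega> r u v) * (EE u * chi (snd u * (\<gamma> + fst v)) * (EE v * chi (snd v * \<gamma>)))"
    proof -
      have c1: "chi ((snd u + snd v) * \<gamma>) = chi (snd u * \<gamma>) * chi (snd v * \<gamma>)"
        by (simp add: distrib_right chi_add)
      have c2: "chi (snd u * (\<gamma> + fst v)) = chi (snd u * \<gamma>) * chi (snd u * fst v)"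
        by (simp add: distrib_left chi_add)
      show ?thesis unfolding gform2 c1 c2 using EE_nz[of u] EE_nz[of v] chi_sq[of "snd u * fst v"]
        by (simp add: field_simps)
    qed
    show "mono (fst (vadd u v)) (\<lambda>\<gamma>. EE (vadd u v) * chi (snd (vadd u v) * \<gamma>)) \<delta> \<gamma> =
      ipow (gZ4 n \<omega> r u v) * mono (fst u + fst v)
        (\<lambda>\<gamma>. EE u * chi (snd u * (\<gamma> + fst v)) * (EE v * chi (snd v * \<gamma>))) \<delta> \<gamma>"
      using key by (simp add: mono_def)
  qed
qed

lemma weyl: "weyl_multiplier n (\<lambda>u v. ipow (gZ4 n \<omega> r (u::'a vec) v))"
  unfolding weyl_multiplier_def
proof (intro conjI allI impI)
  fix u v :: "'a vec" show "cmod (ipow (gZ4 n \<omega> r u v)) = 1" by simp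
next
  fix u v w :: "'a vec"
  have assoc: "vadd (vadd u v) w = vadd u (vadd v w)" by (simp add: vadd_def add.assoc)
  have X: "chi (snd u * fst v) * chi ((snd u + snd v) * fst w) =
           chi (snd u * (fst v + fst w)) * chi (snd v * fst w)"
    by (simp add: distrib_left distrib_right chi_add)
  show "ipow (gZ4 n \<omega> r u v) * ipow (gZ4 n \<omega> r (vadd u v) w) =
        ipow (gZ4 n \<omega> r u (vadd v w)) * ipow (gZ4 n \<omega> r v w)"
    unfolding gform2 assoc using EE_nz[of u] EE_nz[of v] EE_nz[of w] EE_nz[of "vadd u v"]
      EE_nz[of "vadd v w"] X
    by (simp add: field_simps)
next
  fix d1 d2 :: "'a vec"
  assume "\<exists>u a b. d1 = vscale a u \<and> d2 = vscale b u"
  then obtain u a b where d1: "d1 = vscale a u" and d2: "d2 = vscale b u" by blast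
  define s where "s = fsqrt (fst u * snd u)"
  have E: "EE (vscale c u) = ee (c * s)" for c
  proof -
    have "fst (vscale c u) * snd (vscale c u) = c * c * (fst u * snd u)" by (simp add: vscale_def algebra_simps)
    thus ?thesis by (simp add: fsqrt_scale s_def)
  qed
  have sum: "vadd d1 d2 = vscale (a + b) u" by (simp add: d1 d2 vadd_def vscale_def distrib_right)
  have s2: "s * s = fst u * snd u" using fsqrt_sq[of "fst u * snd u"] by (simp add: s_def power2_eq_square)
  have "ee ((a + b) * s) = ee (a * s) * ee (b * s) * chi (a * s * (b * s))"
    by (simp add: distrib_right ee_add)
  moreover have "a * s * (b * s) = snd d1 * fst d2"
    using s2 by (simp add: d1 d2 vscale_def algebra_simps)
  ultimately show "ipow (gZ4 n \<omega> r d1 d2) = 1"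
    unfolding gform2 sum using E[of a] E[of b] E[of "a+b"] ee_nz[of "a*s"] ee_nz[of "b*s"] chi_sq[of "snd d1 * fst d2"]
    by (simp add: d1 d2 field_simps)
next
  fix u v :: "'a vec"
  have comm: "vadd v u = vadd u v" by (simp add: vadd_def add.commute)
  have S: "Sform u v = snd u * fst v + snd v * fst u"
    by (simp add: Sform_def minus_eq_plus mult.commute add.commute)
  have A: "cnj (ipow (gZ4 n \<omega> r u v)) = inverse (EE (vadd u v)) * EE u * EE v * chi (snd u * fst v)"
    unfolding gform by (simp only: complex_cnj_mult complex_cnj_cnj chi_cnj cnj_EE[of "vadd u v"])
  have B: "ipow (gZ4 n \<omega> r v u) = EE (vadd u v) * inverse (EE v) * inverse (EE u) * chi (snd v * fst u)"
    unfolding gform comm by (simp only: cnj_EE)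
  have "cnj (ipow (gZ4 n \<omega> r u v)) * ipow (gZ4 n \<omega> r v u) =
      (inverse (EE (vadd u v)) * EE (vadd u v)) * (EE u * inverse (EE u)) * (EE v * inverse (EE v))
      * (chi (snd u * fst v) * chi (snd v * fst u))"
    unfolding A B by (simp only: ac_simps)
  also have "\<dots> = chi (snd u * fst v) * chi (snd v * fst u)"
    by (simp only: left_inverse[OF EE_nz[of "vadd u v"]] right_inverse[OF EE_nz[of u]] right_inverse[OF EE_nz[of v]]) simp
  also have "\<dots> = msign (Tr n (Sform u v))" unfolding S chi_add ..
  finally show "cnj (ipow (gZ4 n \<omega> r u v)) * ipow (gZ4 n \<omega> r v u) = msign (Tr n (Sform u v))" .
qed

end


context F2 begin

lemma fst_vscale[simp]: "fst (vscale c u) = c * fst u" by (simp add: vscale_def)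
lemma snd_vscale[simp]: "snd (vscale c u) = c * snd u" by (simp add: vscale_def)

lemma mem_line: "p \<in> line v u \<longleftrightarrow> (\<exists>c. p = vadd v (vscale c u))"
  by (auto simp: line_def)

lemma vec_eq: "(p::'a vec) = q \<longleftrightarrow> fst p = fst q \<and> snd p = snd q"
  by (simp add: prod_eq_iff)

lemma add_move: "x + y = z \<Longrightarrow> y = z + (x::'a)"
proof -
  assume h: "x + y = z"
  have "z + x = (x + y) + x" using h by simp
  also have "\<dots> = y + (x + x)" by (simp only: ac_simps)
  also have "\<dots> = y" by (simp add: add_self)
  finally show ?thesis by simp
qed

lemma line_eq_param:
  assumes u': "u' \<noteq> (0,0)" and eq: "line v u = line v' (u'::'a vec)"
  shows "\<exists>t c. c \<noteq> 0 \<and> v' = vadd v (vscale t u) \<and> u' = vscale c u"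
proof -
  have "v' \<in> line v' u'" unfolding mem_line by (intro exI[of _ 0]) (simp add: vec_eq)
  hence "v' \<in> line v u" using eq by simp
  then obtain t where t: "v' = vadd v (vscale t u)" unfolding mem_line by blast
  have "vadd v' u' \<in> line v' u'" unfolding mem_line by (intro exI[of _ 1]) (simp add: vec_eq)
  hence "vadd v' u' \<in> line v u" using eq by simp
  then obtain t' where t': "vadd v' u' = vadd v (vscale t' u)" unfolding mem_line by blast
  have uc: "u' = vscale (t' + t) u"
  proof -
    have f: "fst v + t * fst u + fst u' = fst v + t' * fst u" using t t' by (simp add: vec_eq)
    have g: "snd v + t * snd u + snd u' = snd v + t' * snd u" using t t' by (simp add: vec_eq)
    have "fst u' = (fst v + t' * fst u) + (fst v + t * fst u)" using add_move[OF f] .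
    also have "\<dots> = (t' + t) * fst u + (fst v + fst v)" by (simp add: algebra_simps)
    finally have 1: "fst u' = (t' + t) * fst u" by (simp add: add_self)
    have "snd u' = (snd v + t' * snd u) + (snd v + t * snd u)" using add_move[OF g] .
    also have "\<dots> = (t' + t) * snd u + (snd v + snd v)" by (simp add: algebra_simps)
    finally have 2: "snd u' = (t' + t) * snd u" by (simp add: add_self)
    show ?thesis using 1 2 by (simp add: vec_eq)
  qed
  have "t' + t \<noteq> 0" using uc u' by (auto simp: vec_eq)
  thus ?thesis using t uc by blast
qed

lemma sum_reindex_mult: "(c::'a) \<noteq> 0 \<Longrightarrow> (\<Sum>x\<in>UNIV. F (x * c)) = (\<Sum>x\<in>UNIV. F x :: complex)"
  by (rule sum.reindex_bij_witness[where i="\<lambda>y. y / c" and j="\<lambda>x. x * c"]) simp_all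

lemma Qrep_shift:
  assumes c: "c \<noteq> 0"
  shows "Qrep n \<omega> r (vadd v (vscale t u)) (vscale c u) = Qrep n \<omega> r v (u::'a vec)"
proof (intro ext)
  fix \<delta> \<gamma> :: 'a
  define F where "F \<mu> = (if \<delta> = \<gamma> + \<mu> * fst u then
         ee (\<mu> * fsqrt (fst u * snd u)) * chi (\<mu> * (snd u * (fst v + \<gamma>) + fst u * snd v)) else 0)" for \<mu>
  have "Qrep n \<omega> r (vadd v (vscale t u)) (vscale c u) \<delta> \<gamma> = 1 / of_nat CARD('a) * (\<Sum>lam\<in>UNIV. F (lam * c))"
    unfolding Qrep_def
  proof (intro arg_cong2[where f="(*)"] refl sum.cong)
    fix lam :: 'a
    have s: "fsqrt (c * fst u * (c * snd u)) = c * fsqrt (fst u * snd u)"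
      using fsqrt_scale[of c "fst u * snd u"] by (simp add: ac_simps)
    have a: "lam * (c * snd u * (fst v + t * fst u + \<gamma>) + c * fst u * (snd v + t * snd u)) =
             lam * c * (snd u * (fst v + \<gamma>) + fst u * snd v) + (lam*c*t*(fst u * snd u) + lam*c*t*(fst u * snd u))"
      by (simp add: algebra_simps)
    show "(if \<delta> = \<gamma> + lam * fst (vscale c u) then
          ee (lam * fsqrt (fst (vscale c u) * snd (vscale c u))) *
          chi (lam * (snd (vscale c u) * (fst (vadd v (vscale t u)) + \<gamma>) + fst (vscale c u) * snd (vadd v (vscale t u))))
         else 0) = F (lam * c)"
      unfolding F_def fst_vscale snd_vscale fst_vadd snd_vadd s a add_self add_0_right
      by (simp add: ac_simps)
  qed
  also have "\<dots> = 1 / of_nat CARD('a) * (\<Sum>lam\<in>UNIV. F lam)" using sum_reindex_mult[OF c] by simp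
  also have "\<dots> = Qrep n \<omega> r v u \<delta> \<gamma>" unfolding Qrep_def F_def ..
  finally show "Qrep n \<omega> r (vadd v (vscale t u)) (vscale c u) \<delta> \<gamma> = Qrep n \<omega> r v u \<delta> \<gamma>" .
qed

lemma Qrep_welldef:
  "u' \<noteq> (0,0) \<Longrightarrow> line v u = line v' (u'::'a vec) \<Longrightarrow> Qrep n \<omega> r v u = Qrep n \<omega> r v' u'"
proof -
  assume u': "u' \<noteq> (0,0)" and eq: "line v u = line v' u'"
  obtain t c where c: "c \<noteq> 0" and v': "v' = vadd v (vscale t u)" and uu: "u' = vscale c u"
    using line_eq_param[OF u' eq] by blast
  show ?thesis unfolding v' uu Qrep_shift[OF c] ..
qed

lemma Qline_line: "u \<noteq> (0,0) \<Longrightarrow> Qline n \<omega> r (line v u) = Qrep n \<omega> r v (u::'a vec)"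
proof -
  assume u: "u \<noteq> (0,0)"
  define p where "p = (SOME p. snd p \<noteq> (0,0) \<and> line v u = line (fst p) (snd p))"
  have "\<exists>p. snd p \<noteq> (0,0) \<and> line v u = line (fst p) (snd p)" using u by (intro exI[of _ "(v,u)"]) simp
  hence p: "snd p \<noteq> (0,0) \<and> line v u = line (fst p) (snd p)" unfolding p_def by (rule someI_ex)
  have "Qline n \<omega> r (line v u) = Qrep n \<omega> r (fst p) (snd p)" unfolding Qline_def p_def Let_def ..
  also have "\<dots> = Qrep n \<omega> r v u" using p Qrep_welldef[of "snd p" v u "fst p"] by simp
  finally show ?thesis .
qed

end


context F2 begin

lemma eq_add_iff: "((d::'a) = g + x) = (x = d + g)"
proof
  assume "d = g + x" thus "x = d + g" using add_move[of g x d] by simp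
next
  assume "x = d + g" thus "d = g + x" using add_move[of d g x] by (simp add: add.commute)
qed

lemma Qrep_a0:
  assumes a: "fst u = 0" and b: "snd u \<noteq> 0"
  shows "Qrep n \<omega> r v (u::'a vec) \<delta> \<gamma> = (if \<delta> = \<gamma> \<and> \<gamma> = fst v then 1 else 0)"
proof -
  have "Qrep n \<omega> r v u \<delta> \<gamma> = 1 / of_nat CARD('a) * (\<Sum>lam\<in>UNIV. if \<delta> = \<gamma> then chi ((snd u * (fst v + \<gamma>)) * lam) else 0)"
    unfolding Qrep_def
  proof (intro arg_cong2[where f="(*)"] refl sum.cong)
    fix lam :: 'a
    have "fsqrt (fst u * snd u) = 0" using a by simp
    thus "(if \<delta> = \<gamma> + lam * fst u then ee (lam * fsqrt (fst u * snd u)) * chi (lam * (snd u * (fst v + \<gamma>) + fst u * snd v)) else 0) =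
          (if \<delta> = \<gamma> then chi ((snd u * (fst v + \<gamma>)) * lam) else 0)"
      using a by (simp add: mult.commute)
  qed
  also have "\<dots> = (if \<delta> = \<gamma> \<and> \<gamma> = fst v then 1 else 0)"
  proof (cases "\<delta> = \<gamma>")
    case True
    have "snd u * (fst v + \<gamma>) = 0 \<longleftrightarrow> \<gamma> = fst v" using b add_cancel_iff[of "fst v" \<gamma>] by auto
    thus ?thesis using True chi_sum_mult[of "snd u * (fst v + \<gamma>)"] by auto
  qed simp
  finally show ?thesis .
qed

lemma Qrep_a1:
  assumes a: "fst u \<noteq> 0"
  shows "Qrep n \<omega> r v (u::'a vec) \<delta> \<gamma> = 1 / of_nat CARD('a) *
     (ee ((\<delta> + \<gamma>) / fst u * fsqrt (fst u * snd u)) *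
      chi ((\<delta> + \<gamma>) / fst u * (snd u * (fst v + \<gamma>) + fst u * snd v)))"
proof -
  have "Qrep n \<omega> r v u \<delta> \<gamma> = 1 / of_nat CARD('a) * (\<Sum>lam\<in>UNIV. if lam = (\<delta> + \<gamma>) / fst u then
       ee (lam * fsqrt (fst u * snd u)) * chi (lam * (snd u * (fst v + \<gamma>) + fst u * snd v)) else 0)"
    unfolding Qrep_def
    by (intro arg_cong2[where f="(*)"] refl sum.cong) (use a in \<open>auto simp: eq_add_iff field_simps\<close>)
  thus ?thesis by simp
qed

lemma chi_norm: "cmod (chi x) = 1" by (simp add: msign_def)

lemma sqrt_q: "complex_of_real (1 / sqrt (real CARD('a))) * complex_of_real (1 / sqrt (real CARD('a))) = 1 / of_nat CARD('a)"
proof -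
  have "(1 / sqrt (real CARD('a))) * (1 / sqrt (real CARD('a))) = 1 / real CARD('a)"
    using card_pos by (simp add: real_sqrt_mult[symmetric])
  hence "complex_of_real ((1 / sqrt (real CARD('a))) * (1 / sqrt (real CARD('a)))) = complex_of_real (1 / real CARD('a))" by simp
  thus ?thesis by (simp only: of_real_mult) simp
qed

lemma rank_Qrep: "u \<noteq> (0,0) \<Longrightarrow> rank_one_proj (Qrep n \<omega> r v (u::'a vec))"
proof (cases "fst u = 0")
  case True
  assume u: "u \<noteq> (0,0)"
  hence b: "snd u \<noteq> 0" using True by (auto simp: vec_eq)
  define \<psi> where "\<psi> \<delta> = (if \<delta> = fst v then 1 else (0::complex))" for \<delta>
  have "(\<Sum>\<gamma>\<in>UNIV. (cmod (\<psi> \<gamma>))^2) = (\<Sum>\<gamma>\<in>UNIV. if \<gamma> = fst v then 1 else 0)"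
    by (intro sum.cong) (auto simp: \<psi>_def)
  also have "\<dots> = 1" by simp
  finally have n1: "(\<Sum>\<gamma>\<in>UNIV. (cmod (\<psi> \<gamma>))^2) = 1" .
  have "Qrep n \<omega> r v u = (\<lambda>\<delta> \<gamma>. \<psi> \<delta> * cnj (\<psi> \<gamma>))"
    by (intro ext) (auto simp: Qrep_a0[OF True b] \<psi>_def)
  thus ?thesis using n1 unfolding rank_one_proj_def by blast
next
  case False
  define a where "a = fst u"
  define s where "s = fsqrt (fst u * snd u)"
  define K where "K = snd u * fst v + fst u * snd v"
  define \<psi> where "\<psi> \<delta> = complex_of_real (1 / sqrt (real CARD('a))) * ee (\<delta> / a * s) * chi (\<delta> / a * K)" for \<delta>
  have a: "a \<noteq> 0" using False a_def by simp
  have ss: "s * s = fst u * snd u" using fsqrt_sq[of "fst u * snd u"] by (simp add: s_def power2_eq_square)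
  have "(\<Sum>\<gamma>\<in>UNIV. (cmod (\<psi> \<gamma>))^2) = (\<Sum>\<gamma>\<in>(UNIV::'a set). (1 / sqrt (real CARD('a)))^2)"
    by (rule sum.cong[OF refl]) (simp add: \<psi>_def norm_mult norm_divide chi_norm)
  also have "\<dots> = 1" using card_pos by (simp add: power_divide)
  finally have n1: "(\<Sum>\<gamma>\<in>UNIV. (cmod (\<psi> \<gamma>))^2) = 1" .
  have "Qrep n \<omega> r v u \<delta> \<gamma> = \<psi> \<delta> * cnj (\<psi> \<gamma>)" for \<delta> \<gamma>
  proof -
    define x where "x = \<delta> / a"
    define y where "y = \<gamma> / a"
    have g: "\<gamma> = y * a" using a by (simp add: y_def)
    have L: "(\<delta> + \<gamma>) / fst u = x + y" by (simp add: x_def y_def a_def add_divide_distrib)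
    define X where "X = x * y * (fst u * snd u)"
    define Y where "Y = y * y * (fst u * snd u)"
    have xy: "x * s * (y * s) = X" unfolding X_def ss[symmetric] by (simp only: ac_simps)
    have h1: "ee ((x + y) * s) = ee (x * s) * ee (y * s) * chi X"
      unfolding distrib_right ee_add xy ..
    have h2: "(x + y) * (snd u * (fst v + \<gamma>) + fst u * snd v) = (x * K + y * K) + (X + Y)"
      unfolding g X_def Y_def K_def a_def by (simp add: algebra_simps)
    have h3: "cnj (ee (y * s)) = ee (y * s) * chi Y"
      unfolding cnj_ee2 by (simp add: Y_def power2_eq_square ss[symmetric] ac_simps)
    have "Qrep n \<omega> r v u \<delta> \<gamma> = 1 / of_nat CARD('a) * (ee (x * s) * ee (y * s) * chi X * (chi (x*K) * chi (y*K) * chi X * chi Y))"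
      unfolding Qrep_a1[OF False] L s_def[symmetric] h1 h2 chi_add by (simp add: ac_simps)
    also have "\<dots> = 1 / of_nat CARD('a) * (ee (x * s) * ee (y * s) * (chi X * chi X) * (chi (x*K) * chi (y*K) * chi Y))"
      by (simp only: ac_simps)
    also have "\<dots> = 1 / of_nat CARD('a) * (ee (x * s) * ee (y * s) * (chi (x*K) * chi (y*K) * chi Y))"
      by (simp only: chi_sq) simp
    also have "\<dots> = \<psi> \<delta> * cnj (\<psi> \<gamma>)"
      unfolding \<psi>_def x_def[symmetric] y_def[symmetric] complex_cnj_mult h3 chi_cnj complex_cnj_complex_of_real
      using sqrt_q by (simp add: ac_simps)
    finally show ?thesis .
  qed
  hence "Qrep n \<omega> r v u = (\<lambda>\<delta> \<gamma>. \<psi> \<delta> * cnj (\<psi> \<gamma>))" by (intro ext)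
  thus ?thesis using n1 unfolding rank_one_proj_def by blast
qed

end


lemma opmult_opsum_left: "finite I \<Longrightarrow> opmult (opsum I F) B = opsum I (\<lambda>i. opmult (F i) (B::'a::finite op))"
  by (intro ext) (simp add: opmult_def opsum_def sum_distrib_right sum.swap[of _ UNIV I])

lemma opmult_opsum_right: "finite I \<Longrightarrow> opmult B (opsum I F) = opsum I (\<lambda>i. opmult B (F i :: 'a::finite op))"
  by (intro ext) (simp add: opmult_def opsum_def sum_distrib_left sum.swap[of _ UNIV I])

lemma optrace_opsum: "finite I \<Longrightarrow> optrace (opsum I F) = (\<Sum>i\<in>I. optrace (F i :: 'a::finite op))"
  by (simp add: optrace_def opsum_def sum.swap[of _ UNIV I])

context F2 begin

definition TT :: "'a vec \<Rightarrow> 'a vec \<Rightarrow> 'a \<Rightarrow> 'a \<Rightarrow> complex" where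
  "TT v u lam \<gamma> = 1 / of_nat CARD('a) * (ee (lam * fsqrt (fst u * snd u)) *
      chi (lam * (snd u * (fst v + \<gamma>) + fst u * snd v)))"

lemma Qrep_opsum: "Qrep n \<omega> r v u = opsum UNIV (\<lambda>lam. mono (lam * fst u) (TT v u lam))"
  unfolding Qrep_def opsum_def mono_def TT_def sum_distrib_left by (intro ext sum.cong refl) simp

lemma double_collapse:
  assumes "\<And>x y. \<not> (x = 0 \<and> y = 0) \<Longrightarrow> F x y = (0::complex)"
  shows "(\<Sum>x\<in>(UNIV::'a set). \<Sum>y\<in>(UNIV::'a set). F x y) = F 0 0"
proof -
  have "(\<Sum>x\<in>(UNIV::'a set). \<Sum>y\<in>(UNIV::'a set). F x y) = (\<Sum>x\<in>(UNIV::'a set). \<Sum>y\<in>(UNIV::'a set). if x = 0 then (if y = 0 then F 0 0 else 0) else 0)"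
    using assms by (intro sum.cong refl) auto
  also have "\<dots> = (\<Sum>x\<in>(UNIV::'a set). if x = 0 then F 0 0 else 0)"
    by (intro sum.cong refl) simp
  finally show ?thesis by simp
qed

lemma nonpar:
  assumes u1: "u1 \<noteq> (0,0)" and np: "\<not> parallel u1 (u2::'a vec)"
    and e1: "x * fst u1 + y * fst u2 = 0" and e2: "x * snd u1 + y * snd u2 = 0"
  shows "x = 0 \<and> y = 0"
proof -
  have y: "y = 0"
  proof (rule ccontr)
    assume y: "y \<noteq> 0"
    have "y * fst u2 = x * fst u1" "y * snd u2 = x * snd u1"
      using e1 e2 add_cancel_iff by (metis add.commute)+
    hence "u2 = vscale (x / y) u1" using y by (simp add: vec_eq field_simps)
    thus False using np unfolding parallel_def by blast
  qed
  hence "x * fst u1 = 0" "x * snd u1 = 0" using e1 e2 by simp_all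
  hence "x = 0" using u1 by (auto simp: vec_eq)
  thus ?thesis using y by simp
qed

lemma trace_Q:
  assumes u1: "u1 \<noteq> (0,0)" and u2: "u2 \<noteq> (0,0)" and np: "\<not> parallel u1 (u2::'a vec)"
  shows "optrace (opmult (Qrep n \<omega> r v1 u1) (Qrep n \<omega> r v2 u2)) = 1 / of_nat CARD('a)"
proof -
  define F where "F x y = (if x * fst u1 + y * fst u2 = 0 then
       (\<Sum>\<gamma>\<in>UNIV. TT v1 u1 x (\<gamma> + y * fst u2) * TT v2 u2 y \<gamma>) else 0)" for x y
  have "optrace (opmult (Qrep n \<omega> r v1 u1) (Qrep n \<omega> r v2 u2)) = (\<Sum>y\<in>UNIV. \<Sum>x\<in>UNIV. F x y)"
    unfolding Qrep_opsum opmult_opsum_left[OF finite_class.finite_UNIV] opmult_opsum_right[OF finite_class.finite_UNIV]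
      optrace_opsum[OF finite_class.finite_UNIV] opmult_mono optrace_mono F_def ..
  also have "\<dots> = (\<Sum>x\<in>UNIV. \<Sum>y\<in>UNIV. F x y)" by (rule sum.swap)
  also have "\<dots> = F 0 0"
  proof (rule double_collapse)
    fix x y :: 'a assume nz: "\<not> (x = 0 \<and> y = 0)"
    show "F x y = 0"
    proof (cases "x * fst u1 + y * fst u2 = 0")
      case False thus ?thesis by (simp add: F_def)
    next
      case True
      have k: "x * snd u1 + y * snd u2 \<noteq> 0" using nonpar[OF u1 np True] nz by blast
      define C where "C = 1 / of_nat CARD('a) * (ee (x * fsqrt (fst u1 * snd u1))) *
         chi (x * (snd u1 * (fst v1 + y * fst u2) + fst u1 * snd v1)) *
         (1 / of_nat CARD('a) * (ee (y * fsqrt (fst u2 * snd u2)))) *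
         chi (y * (snd u2 * fst v2 + fst u2 * snd v2))"
      have t: "TT v1 u1 x (\<gamma> + y * fst u2) * TT v2 u2 y \<gamma> = C * chi ((x * snd u1 + y * snd u2) * \<gamma>)" for \<gamma>
      proof -
        have a1: "x * (snd u1 * (fst v1 + (\<gamma> + y * fst u2)) + fst u1 * snd v1) =
           x * (snd u1 * (fst v1 + y * fst u2) + fst u1 * snd v1) + x * snd u1 * \<gamma>"
          by (simp add: algebra_simps)
        have a2: "y * (snd u2 * (fst v2 + \<gamma>) + fst u2 * snd v2) = y * (snd u2 * fst v2 + fst u2 * snd v2) + y * snd u2 * \<gamma>"
          by (simp add: algebra_simps)
        have a3: "chi ((x * snd u1 + y * snd u2) * \<gamma>) = chi (x * snd u1 * \<gamma>) * chi (y * snd u2 * \<gamma>)"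
          by (simp add: distrib_right chi_add)
        show ?thesis unfolding TT_def a1 a2 chi_add a3 C_def by (simp only: ac_simps)
      qed
      have "(\<Sum>\<gamma>\<in>UNIV. TT v1 u1 x (\<gamma> + y * fst u2) * TT v2 u2 y \<gamma>) = C * (\<Sum>\<gamma>\<in>UNIV. chi ((x * snd u1 + y * snd u2) * \<gamma>))"
        unfolding t sum_distrib_left ..
      also have "\<dots> = 0" using k chi_sum_mult by simp
      finally show ?thesis by (simp add: F_def)
    qed
  qed
  also have "\<dots> = (\<Sum>\<gamma>\<in>(UNIV::'a set). 1 / of_nat CARD('a) * (1 / of_nat CARD('a)))"
    by (simp add: F_def TT_def msign_def)
  also have "\<dots> = 1 / of_nat CARD('a)" using card_pos by simp
  finally show ?thesis .
qed

lemma line_same: "line v u = line v0 u \<longleftrightarrow> v \<in> line v0 (u::'a vec)"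
proof
  assume "line v u = line v0 u"
  moreover have "v \<in> line v u" unfolding mem_line by (intro exI[of _ 0]) (simp add: vec_eq)
  ultimately show "v \<in> line v0 u" by simp
next
  assume "v \<in> line v0 u"
  then obtain t where t: "v = vadd v0 (vscale t u)" unfolding mem_line by blast
  show "line v u = line v0 u"
  proof (intro set_eqI iffI)
    fix p assume "p \<in> line v u"
    then obtain c where "p = vadd v (vscale c u)" unfolding mem_line by blast
    hence "p = vadd v0 (vscale (t + c) u)" using t by (simp add: vec_eq algebra_simps)
    thus "p \<in> line v0 u" unfolding mem_line by blast
  next
    fix p assume "p \<in> line v0 u"
    then obtain c where c: "p = vadd v0 (vscale c u)" unfolding mem_line by blast
    have "vadd v (vscale (c + t) u) = vadd v0 (vscale (c + (t + t)) u)" using t by (simp add: vec_eq algebra_simps)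
    hence "p = vadd v (vscale (c + t) u)" using c by (simp add: add_self)
    thus "p \<in> line v u" unfolding mem_line by blast
  qed
qed

lemma card_line: "u \<noteq> (0,0) \<Longrightarrow> card (line v (u::'a vec)) = CARD('a)"
proof -
  assume u: "u \<noteq> (0,0)"
  have L: "line v u = (\<lambda>c. vadd v (vscale c u)) ` UNIV" by (auto simp: line_def)
  have "inj (\<lambda>c. vadd v (vscale c u))"
  proof (rule injI)
    fix c d assume "vadd v (vscale c u) = vadd v (vscale d u)"
    hence "c * fst u = d * fst u" "c * snd u = d * snd u" by (simp_all add: vec_eq)
    thus "c = d" using u by (auto simp: vec_eq)
  qed
  thus ?thesis unfolding L by (simp add: card_image)
qed

lemma sum_pairs: "(\<Sum>v\<in>(UNIV::'a vec set). G v) = (\<Sum>b1\<in>UNIV. \<Sum>b2\<in>UNIV. G (b1, b2) :: complex)"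
  by (simp add: sum.cartesian_product)

lemma Qrep_sum_all:
  assumes u: "u \<noteq> (0,0)"
  shows "(\<Sum>v\<in>UNIV. Qrep n \<omega> r v (u::'a vec) \<delta> \<gamma>) = of_nat CARD('a) * idop \<delta> \<gamma>"
proof -
  define q :: complex where "q = of_nat CARD('a)"
  have "(\<Sum>v\<in>UNIV. Qrep n \<omega> r v u \<delta> \<gamma>) = (\<Sum>lam\<in>UNIV. \<Sum>v\<in>UNIV. mono (lam * fst u) (TT v u lam) \<delta> \<gamma>)"
    unfolding Qrep_opsum opsum_def by (rule sum.swap)
  also have "\<dots> = (\<Sum>lam\<in>(UNIV::'a set). if lam = 0 then q * q * (1 / q) * idop \<delta> \<gamma> else 0)"
  proof (rule sum.cong[OF refl])
    fix lam :: 'a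
    show "(\<Sum>v\<in>UNIV. mono (lam * fst u) (TT v u lam) \<delta> \<gamma>) = (if lam = 0 then q * q * (1 / q) * idop \<delta> \<gamma> else 0)"
    proof (cases "lam = 0")
      case True
      have "(\<Sum>v\<in>(UNIV::'a vec set). mono (lam * fst u) (TT v u lam) \<delta> \<gamma>) = (\<Sum>v\<in>(UNIV::'a vec set). 1 / q * idop \<delta> \<gamma>)"
        using True by (intro sum.cong refl) (simp add: mono_def TT_def idop_def q_def msign_def)
      also have "\<dots> = q * q * (1 / q) * idop \<delta> \<gamma>"
        by (simp add: q_def card_cartesian_product[of "UNIV::'a set" "UNIV::'a set", simplified])
      finally show ?thesis using True by simp
    next
      case False
      define C where "C = (if \<delta> = \<gamma> + lam * fst u then 1 / q * ee (lam * fsqrt (fst u * snd u)) * chi (lam * snd u * \<gamma>) else 0)"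
      have t: "mono (lam * fst u) (TT (b1, b2) u lam) \<delta> \<gamma> = C * chi ((lam * snd u) * b1) * chi ((lam * fst u) * b2)" for b1 b2
      proof -
        have "lam * (snd u * (b1 + \<gamma>) + fst u * b2) = lam * snd u * \<gamma> + lam * snd u * b1 + lam * fst u * b2"
          by (simp add: algebra_simps)
        thus ?thesis by (simp add: mono_def TT_def C_def chi_add q_def ac_simps)
      qed
      have "(\<Sum>v\<in>UNIV. mono (lam * fst u) (TT v u lam) \<delta> \<gamma>) =
          C * ((\<Sum>b1\<in>UNIV. chi ((lam * snd u) * b1)) * (\<Sum>b2\<in>UNIV. chi ((lam * fst u) * b2)))"
        (is "_ = C * ((\<Sum>b1\<in>UNIV. ?p b1) * (\<Sum>b2\<in>UNIV. ?q b2))")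
      proof -
        have "(\<Sum>v\<in>UNIV. mono (lam * fst u) (TT v u lam) \<delta> \<gamma>) = (\<Sum>b1\<in>UNIV. \<Sum>b2\<in>UNIV. C * (?p b1 * ?q b2))"
          unfolding sum_pairs t by (simp only: mult.assoc)
        also have "\<dots> = C * (\<Sum>b1\<in>UNIV. \<Sum>b2\<in>UNIV. ?p b1 * ?q b2)"
          by (simp only: sum_distrib_left)
        also have "\<dots> = C * ((\<Sum>b1\<in>UNIV. ?p b1) * (\<Sum>b2\<in>UNIV. ?q b2))"
          by (simp only: sum_product)
        finally show ?thesis .
      qed
      also have "\<dots> = 0" using False u by (auto simp: chi_sum_mult vec_eq)
      finally show ?thesis using False by simp
    qed
  qed
  also have "\<dots> = q * idop \<delta> \<gamma>" using card_pos by (simp add: q_def)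
  finally show ?thesis unfolding q_def .
qed

lemma parallel_sum: "u \<noteq> (0,0) \<Longrightarrow> opsum {line v u | v. True} (Qline n \<omega> r) = idop"
proof (intro ext)
  fix \<delta> \<gamma> assume u: "u \<noteq> (0,0)"
  have img: "{line v u | v. True} = (\<lambda>v. line v u) ` UNIV" by auto
  have "of_nat CARD('a) * idop \<delta> \<gamma> = (\<Sum>v\<in>UNIV. Qrep n \<omega> r v (u::'a vec) \<delta> \<gamma>)"
    using Qrep_sum_all[OF u] by simp
  also have "\<dots> = (\<Sum>L\<in>(\<lambda>v. line v u) ` UNIV. \<Sum>v\<in>{v. v \<in> UNIV \<and> line v u = L}. Qrep n \<omega> r v u \<delta> \<gamma>)"
    by (rule sum.image_gen) simp
  also have "\<dots> = (\<Sum>L\<in>(\<lambda>v. line v u) ` UNIV. of_nat CARD('a) * Qline n \<omega> r L \<delta> \<gamma>)"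
  proof (rule sum.cong[OF refl])
    fix L assume "L \<in> (\<lambda>v. line v u) ` UNIV"
    then obtain v0 where L: "L = line v0 u" by blast
    have "(\<Sum>v\<in>{v. v \<in> UNIV \<and> line v u = L}. Qrep n \<omega> r v u \<delta> \<gamma>) = (\<Sum>v\<in>line v0 u. Qline n \<omega> r L \<delta> \<gamma>)"
    proof (rule sum.cong)
      show "{v. v \<in> UNIV \<and> line v u = L} = line v0 u" using line_same[of _ u v0] L by auto
    next
      fix v assume "v \<in> line v0 u"
      hence "line v u = L" using line_same[of v u v0] L by simp
      thus "Qrep n \<omega> r v u \<delta> \<gamma> = Qline n \<omega> r L \<delta> \<gamma>" using Qline_line[OF u, of v] by simp
    qed
    also have "\<dots> = of_nat CARD('a) * Qline n \<omega> r L \<delta> \<gamma>" using card_line[OF u] by simp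
    finally show "(\<Sum>v\<in>{v. v \<in> UNIV \<and> line v u = L}. Qrep n \<omega> r v u \<delta> \<gamma>) = of_nat CARD('a) * Qline n \<omega> r L \<delta> \<gamma>" .
  qed
  also have "\<dots> = of_nat CARD('a) * opsum {line v u | v. True} (Qline n \<omega> r) \<delta> \<gamma>"
    unfolding img opsum_def by (simp add: sum_distrib_left)
  finally show "opsum {line v u | v. True} (Qline n \<omega> r) \<delta> \<gamma> = idop \<delta> \<gamma>"
    using card_pos by simp
qed

end


context F2 begin

lemma translate_line: "translate (line v u) w = line (vadd v w) (u::'a vec)"
proof (intro set_eqI iffI)
  fix p assume "p \<in> translate (line v u) w"
  then obtain c where "p = vadd (vadd v (vscale c u)) w" by (auto simp: translate_def line_def)
  hence "p = vadd (vadd v w) (vscale c u)" by (simp add: vec_eq ac_simps)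
  thus "p \<in> line (vadd v w) u" unfolding mem_line by blast
next
  fix p assume "p \<in> line (vadd v w) u"
  then obtain c where "p = vadd (vadd v w) (vscale c u)" unfolding mem_line by blast
  hence "p = vadd (vadd v (vscale c u)) w" by (simp add: vec_eq ac_simps)
  moreover have "vadd v (vscale c u) \<in> line v u" unfolding mem_line by blast
  ultimately show "p \<in> translate (line v u) w" unfolding translate_def by blast
qed

lemma W_cov: "opmult (opmult (Wop n \<omega> r w) (Qrep n \<omega> r v u)) (adj (Wop n \<omega> r w)) = Qrep n \<omega> r (vadd v w) (u::'a vec)"
proof (intro ext)
  fix \<delta> \<gamma> :: 'a
  define a where "a = fst w"
  define b where "b = snd w"
  have EEw: "EE w * cnj (EE w) = 1" using cnj_ee[of "fsqrt (fst w * snd w)"] by (simp add: mult.commute)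
  have "opmult (opmult (Wop n \<omega> r w) (Qrep n \<omega> r v u)) (adj (Wop n \<omega> r w)) \<delta> \<gamma> =
      EE w * chi (b * (\<delta> + a)) * Qrep n \<omega> r v u (\<delta> + a) (\<gamma> + a) * cnj (EE w * chi (b * (\<gamma> + a)))"
    unfolding Wop_mono mono_conj a_def b_def ..
  also have "\<dots> = 1 / of_nat CARD('a) * (\<Sum>lam\<in>UNIV. (EE w * cnj (EE w)) * (chi (b * (\<delta> + a)) * chi (b * (\<gamma> + a))) *
     (if \<delta> + a = \<gamma> + a + lam * fst u then ee (lam * fsqrt (fst u * snd u)) * chi (lam * (snd u * (fst v + (\<gamma> + a)) + fst u * snd v)) else 0))"
    unfolding Qrep_def sum_distrib_left sum_distrib_right by (intro sum.cong refl) (simp only: complex_cnj_mult chi_cnj ac_simps)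
  also have "\<dots> = Qrep n \<omega> r (vadd v w) u \<delta> \<gamma>"
    unfolding Qrep_def EEw mult_1_left
  proof (intro arg_cong2[where f="(*)"] refl sum.cong)
    fix lam :: 'a
    show "chi (b * (\<delta> + a)) * chi (b * (\<gamma> + a)) *
      (if \<delta> + a = \<gamma> + a + lam * fst u then ee (lam * fsqrt (fst u * snd u)) *
        chi (lam * (snd u * (fst v + (\<gamma> + a)) + fst u * snd v)) else 0) =
      (if \<delta> = \<gamma> + lam * fst u then ee (lam * fsqrt (fst u * snd u)) *
        chi (lam * (snd u * (fst (vadd v w) + \<gamma>) + fst u * snd (vadd v w))) else 0)"
    proof (cases "\<delta> = \<gamma> + lam * fst u")
      case False
      hence "\<delta> + a \<noteq> \<gamma> + a + lam * fst u" by (simp add: ac_simps)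
      thus ?thesis using False by simp
    next
      case True
      have e1: "b * (\<delta> + a) = b * (\<gamma> + a) + b * lam * fst u" unfolding True by (simp add: algebra_simps)
      have e2: "lam * (snd u * (fst (vadd v w) + \<gamma>) + fst u * snd (vadd v w)) =
                lam * (snd u * (fst v + (\<gamma> + a)) + fst u * snd v) + b * lam * fst u"
        by (simp add: a_def b_def algebra_simps)
      have "chi (b * (\<delta> + a)) * chi (b * (\<gamma> + a)) = chi (b * lam * fst u)"
        unfolding e1 chi_add using chi_sq[of "b * (\<gamma> + a)"] by (simp add: ac_simps)
      thus ?thesis using True unfolding e2 chi_add by (simp add: ac_simps)
    qed
  qed
  finally show "opmult (opmult (Wop n \<omega> r w) (Qrep n \<omega> r v u)) (adj (Wop n \<omega> r w)) \<delta> \<gamma> = Qrep n \<omega> r (vadd v w) u \<delta> \<gamma>" .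
qed

lemma line_act_line: "c \<noteq> 0 \<Longrightarrow> line_act c (line v u) = line (torus_act c v) (torus_act c (u::'a vec))"
  unfolding line_act_def
proof (intro set_eqI iffI)
  fix p assume c: "c \<noteq> 0" and "p \<in> torus_act c ` line v u"
  then obtain t where "p = torus_act c (vadd v (vscale t u))" by (auto simp: line_def)
  hence "p = vadd (torus_act c v) (vscale t (torus_act c u))" by (simp add: vec_eq torus_act_def vadd_def algebra_simps)
  thus "p \<in> line (torus_act c v) (torus_act c u)" unfolding mem_line by blast
next
  fix p assume c: "c \<noteq> 0" and "p \<in> line (torus_act c v) (torus_act c u)"
  then obtain t where "p = vadd (torus_act c v) (vscale t (torus_act c u))" unfolding mem_line by blast
  hence "p = torus_act c (vadd v (vscale t u))" by (simp add: vec_eq torus_act_def vadd_def algebra_simps)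
  moreover have "vadd v (vscale t u) \<in> line v u" unfolding mem_line by blast
  ultimately show "p \<in> torus_act c ` line v u" by blast
qed

lemma U_cov:
  assumes c: "c \<noteq> 0"
  shows "opmult (opmult (Uop c) (Qrep n \<omega> r v u)) (adj (Uop c)) = Qrep n \<omega> r (torus_act c v) (torus_act c (u::'a vec))"
proof (intro ext)
  fix \<delta> \<gamma> :: 'a
  show "opmult (opmult (Uop c) (Qrep n \<omega> r v u)) (adj (Uop c)) \<delta> \<gamma> = Qrep n \<omega> r (torus_act c v) (torus_act c u) \<delta> \<gamma>"
    unfolding Uop_conj[OF c] Qrep_def
  proof (intro arg_cong2[where f="(*)"] refl sum.cong)
    fix lam :: 'a
    have i1: "(\<delta> / c = \<gamma> / c + lam * fst u) = (\<delta> = \<gamma> + lam * fst (torus_act c u))"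
      using c by (auto simp: torus_act_def field_simps)
    have i2: "fst (torus_act c u) * snd (torus_act c u) = fst u * snd u"
      using c by (simp add: torus_act_def field_simps)
    have i3: "lam * (snd u * (fst v + \<gamma> / c) + fst u * snd v) =
      lam * (snd (torus_act c u) * (fst (torus_act c v) + \<gamma>) + fst (torus_act c u) * snd (torus_act c v))"
      using c by (simp add: torus_act_def field_simps)
    show "(if \<delta> / c = \<gamma> / c + lam * fst u then ee (lam * fsqrt (fst u * snd u)) *
        chi (lam * (snd u * (fst v + \<gamma> / c) + fst u * snd v)) else 0) =
      (if \<delta> = \<gamma> + lam * fst (torus_act c u) then ee (lam * fsqrt (fst (torus_act c u) * snd (torus_act c u))) *
        chi (lam * (snd (torus_act c u) * (fst (torus_act c v) + \<gamma>) + fst (torus_act c u) * snd (torus_act c v))) else 0)"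
      unfolding i1 i2 i3 ..
  qed
qed

lemma torus_nz: "c \<noteq> 0 \<Longrightarrow> u \<noteq> (0,0) \<Longrightarrow> torus_act c u \<noteq> ((0::'a),0)"
  by (auto simp: torus_act_def vec_eq)

lemma is_line_E: "is_line l \<Longrightarrow> \<exists>v u. u \<noteq> ((0::'a),0) \<and> l = line v u"
  by (simp add: is_line_def)

end


context F2 begin

lemma W_cov_line: "is_line l \<Longrightarrow> opmult (opmult (Wop n \<omega> r w) (Qline n \<omega> r l)) (adj (Wop n \<omega> r w)) = Qline n \<omega> r (translate l (w::'a vec))"
proof -
  assume "is_line l"
  then obtain v u where u: "u \<noteq> ((0::'a),0)" and l: "l = line v u" using is_line_E by blast
  show ?thesis unfolding l Qline_line[OF u] translate_line W_cov ..
qed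

lemma U_cov_line: "c \<noteq> 0 \<Longrightarrow> is_line l \<Longrightarrow> opmult (opmult (Uop c) (Qline n \<omega> r l)) (adj (Uop c)) = Qline n \<omega> r (line_act c (l::'a vec set))"
proof -
  assume c: "c \<noteq> 0" and "is_line l"
  then obtain v u where u: "u \<noteq> ((0::'a),0)" and l: "l = line v u" using is_line_E by blast
  show ?thesis unfolding l Qline_line[OF u] line_act_line[OF c] Qline_line[OF torus_nz[OF c u]] U_cov[OF c] ..
qed

lemma translate_is_line: "is_line l \<Longrightarrow> is_line (translate l (w::'a vec))"
proof -
  assume "is_line l"
  then obtain v u where u: "u \<noteq> ((0::'a),0)" and l: "l = line v u" using is_line_E by blast
  show ?thesis unfolding l translate_line is_line_def using u by blast
qed

lemma quad: "quadrature_system (Qline n \<omega> r)"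
  unfolding quadrature_system_def
proof (intro conjI allI impI)
  fix l :: "'a vec set" assume "is_line l"
  then obtain v u where u: "u \<noteq> ((0::'a),0)" and l: "l = line v u" using is_line_E by blast
  show "rank_one_proj (Qline n \<omega> r l)" unfolding l Qline_line[OF u] by (rule rank_Qrep[OF u])
next
  fix u :: "'a vec" assume "u \<noteq> (0,0)"
  thus "opsum {line v u |v. True} (Qline n \<omega> r) = idop" by (rule parallel_sum)
next
  fix v1 u1 v2 u2 :: "'a vec" assume u1: "u1 \<noteq> (0,0)" and u2: "u2 \<noteq> (0,0)" and np: "\<not> parallel u1 u2"
  show "optrace (opmult (Qline n \<omega> r (line v1 u1)) (Qline n \<omega> r (line v2 u2))) = 1 / of_nat CARD('a)"
    unfolding Qline_line[OF u1] Qline_line[OF u2] by (rule trace_Q[OF u1 u2 np])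
qed

end

theorem mainTheorem8:
  fixes n :: nat and \<omega> :: "nat \<Rightarrow> 'a::{field,finite}" and r :: "nat \<Rightarrow> int" and \<xi> :: 'a
  assumes card: "CARD('a) = 2 ^ n"
    and char2: "(1::'a) + 1 = 0"
    and dual_basis: "\<forall>i<n. \<forall>j<n. Tr n (\<omega> i * \<omega> j) = (if i = j then 1 else 0)"
    and signs: "\<forall>i<n. r i = 1 \<or> r i = -1"
    and gen: "\<xi> \<noteq> 0" "\<forall>x::'a. x \<noteq> 0 \<longrightarrow> (\<exists>k::nat. x = \<xi> ^ k)"
  shows
    \<comment> \<open>Q is well defined on lines\<close>
    "(\<forall>v u v' u'. u \<noteq> (0,0) \<longrightarrow> u' \<noteq> (0,0) \<longrightarrow> line v u = line v' u' \<longrightarrow>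
        Qrep n \<omega> r v u = Qrep n \<omega> r v' u')
   \<and> quadrature_system (Qline n \<omega> r)
    \<comment> \<open>W is a projective unitary representation with multiplier i^g, which is Weyl\<close>
   \<and> proj_unitary_rep (Wop n \<omega> r) (\<lambda>u v. ipow (gZ4 n \<omega> r u v))
   \<and> weyl_multiplier n (\<lambda>u v. ipow (gZ4 n \<omega> r u v))
   \<and> (\<forall>l w. is_line l \<longrightarrow>
        opmult (opmult (Wop n \<omega> r w) (Qline n \<omega> r l)) (adj (Wop n \<omega> r w))
          = Qline n \<omega> r (translate l w))
    \<comment> \<open>U(A) is unitary and covariant\<close>
   \<and> unitary_op (Uop \<xi>)
   \<and> (\<forall>l. is_line l \<longrightarrow>
        opmult (opmult (Uop \<xi>) (Qline n \<omega> r l)) (adj (Uop \<xi>)) = Qline n \<omega> r (line_act \<xi> l))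
    \<comment> \<open>hence (T \<rtimes> V)-covariance: U(A^k) W(w) implements l \<mapsto> A^k (l + w)\<close>
   \<and> (\<forall>k::nat. \<forall>w l. is_line l \<longrightarrow>
        opmult (opmult (opmult (Uop (\<xi>^k)) (Wop n \<omega> r w)) (Qline n \<omega> r l))
               (adj (opmult (Uop (\<xi>^k)) (Wop n \<omega> r w)))
          = Qline n \<omega> r (line_act (\<xi>^k) (translate l w)))"
proof -
  interpret F: F2 n \<omega> r using card char2 dual_basis signs by unfold_locales
  show ?thesis
  proof (intro conjI allI impI)
    fix v u v' u' :: "'a vec" assume "u' \<noteq> (0,0)" "line v u = line v' u'"
    thus "Qrep n \<omega> r v u = Qrep n \<omega> r v' u'" by (rule F.Qrep_welldef)
  next
    show "quadrature_system (Qline n \<omega> r)" by (rule F.quad)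
  next
    show "proj_unitary_rep (Wop n \<omega> r) (\<lambda>u v. ipow (gZ4 n \<omega> r u v))" by (rule F.proj_rep)
  next
    show "weyl_multiplier n (\<lambda>u v. ipow (gZ4 n \<omega> r u v))" by (rule F.weyl)
  next
    fix l :: "'a vec set" and w :: "'a vec" assume "is_line l"
    thus "opmult (opmult (Wop n \<omega> r w) (Qline n \<omega> r l)) (adj (Wop n \<omega> r w)) = Qline n \<omega> r (translate l w)"
      by (rule F.W_cov_line)
  next
    show "unitary_op (Uop \<xi>)" by (rule Uop_unitary[OF gen(1)])
  next
    fix l :: "'a vec set" assume "is_line l"
    thus "opmult (opmult (Uop \<xi>) (Qline n \<omega> r l)) (adj (Uop \<xi>)) = Qline n \<omega> r (line_act \<xi> l)"
      by (rule F.U_cov_line[OF gen(1)])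
  next
    fix k :: nat and w :: "'a vec" and l :: "'a vec set" assume l: "is_line l"
    have c: "\<xi> ^ k \<noteq> 0" using gen(1) by simp
    have "opmult (opmult (opmult (Uop (\<xi>^k)) (Wop n \<omega> r w)) (Qline n \<omega> r l))
               (adj (opmult (Uop (\<xi>^k)) (Wop n \<omega> r w)))
        = opmult (opmult (Uop (\<xi>^k)) (opmult (opmult (Wop n \<omega> r w) (Qline n \<omega> r l)) (adj (Wop n \<omega> r w)))) (adj (Uop (\<xi>^k)))"
      by (simp only: adj_mult opmult_assoc)
    also have "\<dots> = opmult (opmult (Uop (\<xi>^k)) (Qline n \<omega> r (translate l w))) (adj (Uop (\<xi>^k)))"
      unfolding F.W_cov_line[OF l] ..
    also have "\<dots> = Qline n \<omega> r (line_act (\<xi>^k) (translate l w))"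
      by (rule F.U_cov_line[OF c F.translate_is_line[OF l]])
    finally show "opmult (opmult (opmult (Uop (\<xi>^k)) (Wop n \<omega> r w)) (Qline n \<omega> r l))
               (adj (opmult (Uop (\<xi>^k)) (Wop n \<omega> r w))) = Qline n \<omega> r (line_act (\<xi>^k) (translate l w))" .
  qed
qed


end
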